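(* For every integer $r\ge2$, the sequence $\mathcal{F}^{(r)}$ is strongly polynomially computable.
   Context: For an integer $r\ge2$, let $\mathcal{A}^{(r)}$ be the set of pairs of integers $(n,k)$ with $n\ge rk$, and $\mathcal{F}^{(r)}=(\mathcal{F}^{(r)}_{(n,k)})_{(n,k)\in\mathcal{A}^{(r)}}$ with $\mathcal{F}^{(r)}_{(n,k)}=\binom{[n]}{k}$ (ground set $[n]$, so $n_{(n,k)}=n$). Subsets of $[n]$ are identified with characteristic vectors in $\{0,1\}^n$. For a family $\mathcal{G}$ of non-empty subsets of $[N]$ and an integer $p\ge2$, $\mathrm{cd}_p(\mathcal{G})$ is the minimum size of $Y\subseteq[N]$ such that $[N]\setminus Y$ can be colored with $p$ colors with no set $e\in\mathcal{G}$, $e\cap Y=\emptyset$, monochromatic. A sequence $\mathcal{F}=(\mathcal{F}_\alpha)_{\alpha\in\mathcal{A}}$ of families of non-empty subsets of $[n_\alpha]$ is strongly polynomially computable if one can associate with each $\mathcal{F}_\alpha$ a linear order $\le$ on its members such that, for some polynomials $q_1,q_2,q_3$: (1) an algorithm, given $\alpha$, runs in time $q_1(n_\alpha)$ and outputs a Boolean circuit $C_1:\{0,1\}^{2n_\alpha}\to\{0,1\}$ with $C_1(B_1,B_2)=1$ iff $B_1\le B_2$, for all $B_1,B_2\in\mathcal{F}_\alpha$; (2) an algorithm, given $\alpha$, runs in time $q_2(n_\alpha)$ and outputs a Boolean circuit $C_2:\{0,1\}^{n_\alpha}\to\{0,1\}^{n_\alpha}$ such that for every $D\subseteq[n_\alpha]$,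 $C_2(D)$ is the $\le$-minimal subset of $D$ belonging to $\mathcal{F}_\alpha$ if such exists, and the empty set otherwise; (3) for every prime $p$, an algorithm, given $\alpha$, runs in time $q_3(n_\alpha)$ and returns $\mathrm{cd}_p(\mathcal{F}_\alpha)$. *)

theory Defs
  imports "HOL-Computational_Algebra.Primes"
begin

datatype instr =
    RConst nat nat
  | RAdd nat nat nat
  | RSub nat nat nat
  | RLoad nat nat
  | RStore nat nat
  | RJz nat nat

type_synonym ram_state = "nat \<times> (nat \<Rightarrow> nat)"

fun exec_instr :: "instr \<Rightarrow> nat \<Rightarrow> (nat \<Rightarrow> nat) \<Rightarrow> ram_state" where
  "exec_instr (RConst r c) pc M = (Suc pc, M(r := c))"
| "exec_instr (RAdd r a b) pc M = (Suc pc, M(r := M a + M b))"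
| "exec_instr (RSub r a b) pc M = (Suc pc, M(r := M a - M b))"
| "exec_instr (RLoad r a) pc M = (Suc pc, M(r := M (M a)))"
| "exec_instr (RStore a r) pc M = (Suc pc, M(M a := M r))"
| "exec_instr (RJz r l) pc M = (if M r = 0 then (l, M) else (Suc pc, M))"

text \<open>The machine halts when the program counter leaves the program.\<close>
definition ram_step :: "instr list \<Rightarrow> ram_state \<Rightarrow> ram_state" where
  "ram_step P s = (if fst s < length P then exec_instr (P ! fst s) (fst s) (snd s) else s)"

definition ram_init :: "nat list \<Rightarrow> ram_state" where
  "ram_init xs = (0, \<lambda>i. if i < length xs then xs ! i else 0)"

text \<open>Output convention: at halting, cell 0 holds the output length L and
  cells 1..L hold the output.\<close>
definition ram_output :: "(nat \<Rightarrow> nat) \<Rightarrow> nat list" where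
  "ram_output M = map M [1..<Suc (M 0)]"

definition ram_computes_within :: "instr list \<Rightarrow> nat list \<Rightarrow> nat list \<Rightarrow> nat \<Rightarrow> bool" where
  "ram_computes_within P xs ys t \<longleftrightarrow>
     (\<exists>t' \<le> t. let s = (ram_step P ^^ t') (ram_init xs) in
                 length P \<le> fst s \<and> ram_output (snd s) = ys)"

datatype gate = GIn nat | GConst bool | GNot nat | GAnd nat nat | GOr nat nat

type_synonym circuit = "gate list \<times> nat list"  (* gates, output gate indices *)

definition getv :: "bool list \<Rightarrow> nat \<Rightarrow> bool" where
  "getv vs j \<longleftrightarrow> j < length vs \<and> vs ! j"

fun gate_val :: "bool list \<Rightarrow> bool list \<Rightarrow> gate \<Rightarrow> bool" where
  "gate_val xs vs (GIn i) = getv xs i"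
| "gate_val xs vs (GConst b) = b"
| "gate_val xs vs (GNot j) = (\<not> getv vs j)"
| "gate_val xs vs (GAnd j k) = (getv vs j \<and> getv vs k)"
| "gate_val xs vs (GOr j k) = (getv vs j \<or> getv vs k)"

text \<open>Gates are evaluated in order; a gate may only refer to earlier gates.\<close>
fun eval_gates :: "bool list \<Rightarrow> bool list \<Rightarrow> gate list \<Rightarrow> bool list" where
  "eval_gates xs vs [] = vs"
| "eval_gates xs vs (g # gs) = eval_gates xs (vs @ [gate_val xs vs g]) gs"

definition eval_circuit :: "circuit \<Rightarrow> bool list \<Rightarrow> bool list" where
  "eval_circuit C xs = map (getv (eval_gates xs [] (fst C))) (snd C)"

fun enc_gate :: "gate \<Rightarrow> nat list" where
  "enc_gate (GIn i) = [0, i]"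
| "enc_gate (GConst b) = [1, if b then 1 else 0]"
| "enc_gate (GNot j) = [2, j]"
| "enc_gate (GAnd j k) = [3, j, k]"
| "enc_gate (GOr j k) = [4, j, k]"

definition enc_circuit :: "circuit \<Rightarrow> nat list" where
  "enc_circuit C = [length (fst C)] @ concat (map enc_gate (fst C)) @ [length (snd C)] @ snd C"

text \<open>Subset B of [N] = {1..N} as characteristic vector (bit i-1 stands for element i).\<close>
definition charvec :: "nat \<Rightarrow> nat set \<Rightarrow> bool list" where
  "charvec N B = map (\<lambda>i. Suc i \<in> B) [0..<N]"

definition cd :: "nat \<Rightarrow> nat \<Rightarrow> nat set set \<Rightarrow> nat" where
  "cd p N G = (LEAST m. \<exists>Y. Y \<subseteq> {1..N} \<and> card Y = m \<and>
      (\<exists>c :: nat \<Rightarrow> nat. (\<forall>x \<in> {1..N} - Y. c x < p) \<and>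
         (\<forall>e \<in> G. e \<inter> Y = {} \<longrightarrow> \<not> (\<exists>col. \<forall>x \<in> e. c x = col))))"

definition is_min_sub :: "(nat set \<times> nat set) set \<Rightarrow> nat set set \<Rightarrow> nat set \<Rightarrow> nat set \<Rightarrow> bool" where
  "is_min_sub R F D B \<longleftrightarrow> B \<in> F \<and> B \<subseteq> D \<and> (\<forall>B' \<in> F. B' \<subseteq> D \<longrightarrow> (B, B') \<in> R)"

text \<open>A sequence indexed by A, with ground-set sizes nsz, input encodings enc
  (how the index alpha is handed to an algorithm), and families Fam.
  Polynomial time bounds q(n) are written as c * (n+1)^d (every polynomial is
  dominated by such a bound and conversely).\<close>
definition strongly_poly_computable ::
  "'a set \<Rightarrow> ('a \<Rightarrow> nat) \<Rightarrow> ('a \<Rightarrow> nat list) \<Rightarrow> ('a \<Rightarrow> nat set set) \<Rightarrow> bool" where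
  "strongly_poly_computable A nsz enc Fam \<longleftrightarrow>
    (\<exists>R :: 'a \<Rightarrow> (nat set \<times> nat set) set.
       (\<forall>\<alpha> \<in> A. linear_order_on (Fam \<alpha>) (R \<alpha>)) \<and>
       (\<exists>c1 d1 :: nat. \<exists>P1. \<forall>\<alpha> \<in> A. \<exists>C :: circuit.
          ram_computes_within P1 (enc \<alpha>) (enc_circuit C) (c1 * (nsz \<alpha> + 1) ^ d1) \<and>
          (\<forall>B1 \<in> Fam \<alpha>. \<forall>B2 \<in> Fam \<alpha>.
             eval_circuit C (charvec (nsz \<alpha>) B1 @ charvec (nsz \<alpha>) B2) = [(B1, B2) \<in> R \<alpha>])) \<and>
       (\<exists>c2 d2 :: nat. \<exists>P2. \<forall>\<alpha> \<in> A. \<exists>C :: circuit.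
          ram_computes_within P2 (enc \<alpha>) (enc_circuit C) (c2 * (nsz \<alpha> + 1) ^ d2) \<and>
          (\<forall>D. D \<subseteq> {1..nsz \<alpha>} \<longrightarrow>
             (if \<exists>B \<in> Fam \<alpha>. B \<subseteq> D
              then (\<exists>B. is_min_sub (R \<alpha>) (Fam \<alpha>) D B \<and>
                        eval_circuit C (charvec (nsz \<alpha>) D) = charvec (nsz \<alpha>) B)
              else eval_circuit C (charvec (nsz \<alpha>) D) = charvec (nsz \<alpha>) {}))) \<and>
       (\<exists>c3 d3 :: nat. \<forall>p :: nat. prime p \<longrightarrow> (\<exists>P3. \<forall>\<alpha> \<in> A.
          ram_computes_within P3 (enc \<alpha>) [cd p (nsz \<alpha>) (Fam \<alpha>)] (c3 * (nsz \<alpha> + 1) ^ d3))))"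

definition idxA :: "nat \<Rightarrow> (nat \<times> nat) set" where
  "idxA r = {(n, k). 1 \<le> k \<and> r * k \<le> n}"

definition famF :: "nat \<times> nat \<Rightarrow> nat set set" where
  "famF \<alpha> = {B. B \<subseteq> {1..fst \<alpha>} \<and> card B = snd \<alpha>}"

definition encF :: "nat \<times> nat \<Rightarrow> nat list" where
  "encF \<alpha> = [fst \<alpha>, snd \<alpha>]"

end

theory Submission
  imports Defs
begin


fun cmpf :: "nat set \<Rightarrow> nat set \<Rightarrow> nat \<Rightarrow> nat \<Rightarrow> bool" where
  "cmpf A B i 0 = True"
| "cmpf A B i (Suc m) = (if (i \<in> A) = (i \<in> B) then cmpf A B (Suc i) m else i \<in> A)"

lemma cmpf_refl: "cmpf A A i m"
  by (induction m arbitrary: i) auto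

lemma cmpf_antisym: "cmpf A B i m \<Longrightarrow> cmpf B A i m \<Longrightarrow> i \<le> x \<Longrightarrow> x < i + m \<Longrightarrow> (x \<in> A) = (x \<in> B)"
proof (induction m arbitrary: i)
  case 0 then show ?case by simp
next
  case (Suc m)
  show ?case
  proof (cases "x = i")
    case True then show ?thesis using Suc.prems by (auto split: if_splits)
  next
    case False
    then have "(i \<in> A) = (i \<in> B)" using Suc.prems by (auto split: if_splits)
    then show ?thesis using Suc.prems Suc.IH[of "Suc i"] False by auto
  qed
qed

lemma cmpf_trans: "cmpf A B i m \<Longrightarrow> cmpf B C i m \<Longrightarrow> cmpf A C i m"
  by (induction m arbitrary: i) (auto split: if_splits)

lemma cmpf_total: "cmpf A B i m \<or> cmpf B A i m"
  by (induction m arbitrary: i) auto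

definition Rf :: "nat \<times> nat \<Rightarrow> (nat set \<times> nat set) set" where
  "Rf \<alpha> = {(B1, B2). B1 \<in> famF \<alpha> \<and> B2 \<in> famF \<alpha> \<and> cmpf B1 B2 1 (fst \<alpha>)}"

lemma Rf_linear: "linear_order_on (famF \<alpha>) (Rf \<alpha>)"
proof -
  obtain n k where a: "\<alpha> = (n, k)" by fastforce
  have eq: "B1 = B2" if "B1 \<in> famF \<alpha>" "B2 \<in> famF \<alpha>" "cmpf B1 B2 1 n" "cmpf B2 B1 1 n" for B1 B2
  proof (rule set_eqI)
    fix x
    show "(x \<in> B1) = (x \<in> B2)"
    proof (cases "1 \<le> x \<and> x < 1 + n")
      case True then show ?thesis using cmpf_antisym[OF that(3,4)] by blast
    next
      case False then show ?thesis using that(1,2) a by (auto simp: famF_def)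
    qed
  qed
  show ?thesis
    unfolding linear_order_on_def partial_order_on_def preorder_on_def refl_on_def total_on_def antisym_def trans_def
    using a eq cmpf_refl cmpf_total by (auto simp: Rf_def intro: cmpf_trans)
qed

section \<open>Gate semantics\<close>

lemma eval_gates_prefix: "\<exists>ys. eval_gates xs vs gs = vs @ ys \<and> length ys = length gs"
proof (induction gs arbitrary: vs)
  case Nil then show ?case by simp
next
  case (Cons g gs)
  obtain ys where "eval_gates xs (vs @ [gate_val xs vs g]) gs = (vs @ [gate_val xs vs g]) @ ys" "length ys = length gs"
    using Cons.IH by blast
  then show ?case by (intro exI[of _ "gate_val xs vs g # ys"]) simp
qed

lemma eval_gates_length: "length (eval_gates xs vs gs) = length vs + length gs"
  using eval_gates_prefix[of xs vs gs] by auto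

lemma eval_gates_nth:
  "i < length gs \<Longrightarrow> eval_gates xs vs gs ! (length vs + i) = gate_val xs (take (length vs + i) (eval_gates xs vs gs)) (gs ! i)"
proof (induction gs arbitrary: vs i)
  case Nil then show ?case by simp
next
  case (Cons g gs)
  define vs' where "vs' = vs @ [gate_val xs vs g]"
  obtain ys where ys: "eval_gates xs vs' gs = vs' @ ys" using eval_gates_prefix by blast
  show ?case
  proof (cases i)
    case 0
    then show ?thesis using ys by (simp add: vs'_def nth_append)
  next
    case (Suc i')
    then have "i' < length gs" using Cons.prems by simp
    have "length vs' + i' = length vs + i" using Suc by (simp add: vs'_def)
    with Cons.IH[OF \<open>i' < length gs\<close>, of vs'] show ?thesis using Suc by (simp add: vs'_def[symmetric])
  qed
qed

definition gv :: "bool list \<Rightarrow> gate list \<Rightarrow> nat \<Rightarrow> bool" where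
  "gv xs gs i = getv (eval_gates xs [] gs) i"

lemma getv_take: "getv (take i vs) j = (j < i \<and> getv vs j)"
  by (auto simp: getv_def)

lemma gv_at: "i < length gs \<Longrightarrow> gv xs gs i = (case gs ! i of
    GIn j \<Rightarrow> getv xs j | GConst b \<Rightarrow> b | GNot a \<Rightarrow> \<not> (a < i \<and> gv xs gs a)
  | GAnd a b \<Rightarrow> (a < i \<and> gv xs gs a) \<and> (b < i \<and> gv xs gs b)
  | GOr a b \<Rightarrow> (a < i \<and> gv xs gs a) \<or> (b < i \<and> gv xs gs b))"
  using eval_gates_nth[of i gs xs "[]"] eval_gates_length[of xs "[]" gs]
  by (cases "gs ! i") (auto simp: gv_def getv_def[of "eval_gates xs [] gs"] getv_take)

lemma gv_GIn: "i < length gs \<Longrightarrow> gs ! i = GIn j \<Longrightarrow> gv xs gs i = getv xs j"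
  by (simp add: gv_at)
lemma gv_GConst: "i < length gs \<Longrightarrow> gs ! i = GConst b \<Longrightarrow> gv xs gs i = b"
  by (simp add: gv_at)
lemma gv_GNot: "i < length gs \<Longrightarrow> gs ! i = GNot a \<Longrightarrow> a < i \<Longrightarrow> gv xs gs i = (\<not> gv xs gs a)"
  by (simp add: gv_at)
lemma gv_GAnd: "i < length gs \<Longrightarrow> gs ! i = GAnd a b \<Longrightarrow> a < i \<Longrightarrow> b < i \<Longrightarrow> gv xs gs i = (gv xs gs a \<and> gv xs gs b)"
  by (simp add: gv_at)
lemma gv_GOr: "i < length gs \<Longrightarrow> gs ! i = GOr a b \<Longrightarrow> a < i \<Longrightarrow> b < i \<Longrightarrow> gv xs gs i = (gv xs gs a \<or> gv xs gs b)"
  by (simp add: gv_at)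

lemma eval_circuit_gv: "eval_circuit C xs = map (gv xs (fst C)) (snd C)"
  by (simp add: eval_circuit_def gv_def fun_eq_iff)

lemma nth_concat_uniform:
  "(\<And>a. a < N \<Longrightarrow> length (f a) = L) \<Longrightarrow> a < N \<Longrightarrow> b < L \<Longrightarrow> concat (map f [0..<N]) ! (a * L + b) = f a ! b"
proof (induction N)
  case 0 then show ?case by simp
next
  case (Suc N)
  have len: "length (concat (map f [0..<N])) = N * L"
    using Suc.prems(1) by (induction N) auto
  show ?case
  proof (cases "a < N")
    case True
    then have "a * L + b < N * L"
    proof -
      have "a * L + b < a * L + L" using Suc.prems(3) by simp
      also have "\<dots> = Suc a * L" by simp
      also have "\<dots> \<le> N * L" using True by (intro mult_le_mono1) simp
      finally show ?thesis .
    qed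
    then show ?thesis using Suc True len by (simp add: nth_append)
  next
    case False
    then have "a = N" using Suc.prems(2) by simp
    then show ?thesis using len by (simp add: nth_append)
  qed
qed

lemma length_concat_uniform: "(\<And>a. a < N \<Longrightarrow> length (f a) = L) \<Longrightarrow> length (concat (map f [0..<N])) = N * L"
  by (induction N) auto

lemma getv_charvec: "getv (charvec n B) j = (j < n \<and> Suc j \<in> B)"
  by (auto simp: getv_def charvec_def)

lemma getv_append: "getv (xs @ ys) j = (if j < length xs then getv xs j else getv ys (j - length xs))"
  by (auto simp: getv_def nth_append)

lemma length_charvec[simp]: "length (charvec n B) = n"
  by (simp add: charvec_def)


lemma cd_lower:
  assumes Y: "Y \<subseteq> {1..n}" and col: "\<forall>x\<in>{1..n} - Y. c x < p"
    and nm: "\<forall>e\<in>famF (n, k). e \<inter> Y = {} \<longrightarrow> \<not> (\<exists>col. \<forall>x\<in>e. c x = col)"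
  shows "n - p * (k - 1) \<le> card Y"
proof -
  define S where "S = {1..n} - Y"
  have finS: "finite S" by (simp add: S_def)
  have cls: "card {x\<in>S. c x = q} \<le> k - 1" for q
  proof (rule ccontr)
    assume "\<not> card {x\<in>S. c x = q} \<le> k - 1"
    then have "k \<le> card {x\<in>S. c x = q}" by simp
    then obtain e where e: "e \<subseteq> {x\<in>S. c x = q}" "card e = k"
      using obtain_subset_with_card_n by metis
    have "e \<in> famF (n, k)" using e by (auto simp: famF_def S_def)
    moreover have "e \<inter> Y = {}" using e by (auto simp: S_def)
    moreover have "\<forall>x\<in>e. c x = q" using e by auto
    ultimately show False using nm by blast
  qed
  have eqS: "S = (\<Union>q<p. {x\<in>S. c x = q})" using col by (auto simp: S_def)
  have "card (\<Union>q<p. {x\<in>S. c x = q}) \<le> (\<Sum>q<p. card {x\<in>S. c x = q})"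
    by (rule card_UN_le) simp
  then have "card S \<le> (\<Sum>q<p. card {x\<in>S. c x = q})"
    using arg_cong[OF eqS, of card] by linarith
  also have "\<dots> \<le> (\<Sum>q<p. k - 1)" by (rule sum_mono) (rule cls)
  finally have "card S \<le> p * (k - 1)" by simp
  moreover have "card S = n - card Y" using Y by (simp add: S_def card_Diff_subset finite_subset)
  ultimately show ?thesis by simp
qed

lemma cd_upper:
  fixes n p k :: nat
  assumes k: "1 \<le> k"
  defines "m0 \<equiv> n - p * (k - 1)"
  shows "\<exists>c :: nat \<Rightarrow> nat. (\<forall>x \<in> {1..n} - {1..m0}. c x < p) \<and>
         (\<forall>e \<in> famF (n, k). e \<inter> {1..m0} = {} \<longrightarrow> \<not> (\<exists>col. \<forall>x \<in> e. c x = col))"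
proof (cases "k = 1")
  case True
  then have "m0 = n" by (simp add: m0_def)
  show ?thesis
  proof (intro exI[of _ "\<lambda>_. 0"] conjI ballI impI)
    fix x assume "x \<in> {1..n} - {1..m0}" then show "(0::nat) < p" using \<open>m0 = n\<close> by simp
  next
    fix e assume "e \<in> famF (n, k)" "e \<inter> {1..m0} = {}"
    then have "e = {}" using \<open>m0 = n\<close> by (auto simp: famF_def)
    then show "\<not> (\<exists>col. \<forall>x\<in>e. (0::nat) = col)" using \<open>e \<in> famF (n, k)\<close> True by (simp add: famF_def)
  qed
next
  case False
  then have k2: "2 \<le> k" using k by simp
  define c where "c x = (x - Suc m0) div (k - 1)" for x
  show ?thesis
  proof (intro exI[of _ c] conjI ballI impI)
    fix x assume x: "x \<in> {1..n} - {1..m0}"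
    then have "m0 < x" "x \<le> n" by auto
    moreover have "n - m0 \<le> p * (k - 1)" unfolding m0_def by arith
    ultimately have "x - Suc m0 < p * (k - 1)" by arith
    then show "c x < p" unfolding c_def using k2
      by (simp add: div_less_iff_less_mult mult.commute)
  next
    fix e assume e: "e \<in> famF (n, k)" "e \<inter> {1..m0} = {}"
    show "\<not> (\<exists>col. \<forall>x\<in>e. c x = col)"
    proof
      assume "\<exists>col. \<forall>x\<in>e. c x = col"
      then obtain q where q: "\<forall>x\<in>e. c x = q" by blast
      have "e \<subseteq> {Suc m0 + q * (k - 1) ..< Suc m0 + q * (k - 1) + (k - 1)}"
      proof
        fix x
        assume xe: "x \<in> e"
        have "e \<subseteq> {1..n}" using e(1) by (simp add: famF_def)
        then have "x \<in> {1..n}" using xe by blast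
        moreover have "x \<notin> {1..m0}" using e(2) xe by blast
        moreover have "c x = q" using q xe by blast
        ultimately have "m0 < x" and dq: "(x - Suc m0) div (k - 1) = q" by (auto simp: c_def)
        define d where "d = x - Suc m0"
        have Kp: "0 < k - 1" using k2 by simp
        have "d = q * (k - 1) + d mod (k - 1)" using dq unfolding d_def[symmetric]
          by (metis div_mult_mod_eq)
        moreover have "d mod (k - 1) < k - 1" using Kp by simp
        ultimately have "q * (k - 1) \<le> x - Suc m0" "x - Suc m0 < q * (k - 1) + (k - 1)"
          unfolding d_def by linarith+
        then show "x \<in> {Suc m0 + q * (k - 1) ..< Suc m0 + q * (k - 1) + (k - 1)}" using \<open>m0 < x\<close> by auto
      qed
      then have "card e \<le> card {Suc m0 + q * (k - 1) ..< Suc m0 + q * (k - 1) + (k - 1)}"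
        by (intro card_mono) simp_all
      then have "card e \<le> k - 1" by simp
      then show False using e k by (simp add: famF_def)
    qed
  qed
qed

lemma cd_famF:
  assumes k: "1 \<le> k"
  shows "cd p n (famF (n, k)) = n - p * (k - 1)"
  unfolding cd_def
proof (rule Least_equality)
  show "\<exists>Y\<subseteq>{1..n}. card Y = n - p * (k - 1) \<and> (\<exists>c. (\<forall>x\<in>{1..n} - Y. c x < p) \<and>
          (\<forall>e\<in>famF (n, k). e \<inter> Y = {} \<longrightarrow> \<not> (\<exists>col. \<forall>x\<in>e. c x = col)))"
  proof (intro exI[of _ "{1..n - p * (k - 1)}"] conjI)
    show "{1..n - p * (k - 1)} \<subseteq> {1..n}" by auto
    show "card {1..n - p * (k - 1)} = n - p * (k - 1)" by simp
  qed (rule cd_upper[OF k, of n p])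
next
  fix y assume "\<exists>Y\<subseteq>{1..n}. card Y = y \<and> (\<exists>c. (\<forall>x\<in>{1..n} - Y. c x < p) \<and>
          (\<forall>e\<in>famF (n, k). e \<inter> Y = {} \<longrightarrow> \<not> (\<exists>col. \<forall>x\<in>e. c x = col)))"
  then obtain Y c where "Y \<subseteq> {1..n}" "card Y = y" "\<forall>x\<in>{1..n} - Y. c x < p"
     "\<forall>e\<in>famF (n, k). e \<inter> Y = {} \<longrightarrow> \<not> (\<exists>col. \<forall>x\<in>e. c x = col)" by blast
  then show "n - p * (k - 1) \<le> y" using cd_lower[of Y n c p k] by simp
qed


definition ainv :: "nat \<Rightarrow> (nat \<Rightarrow> nat) \<Rightarrow> nat list \<Rightarrow> (nat \<Rightarrow> nat) \<Rightarrow> bool" where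
  "ainv base regs w M \<longleftrightarrow> (\<forall>a<base. M a = regs a) \<and> (\<forall>i<length w. M (base+i) = w!i)"

fun aok :: "nat \<Rightarrow> instr \<Rightarrow> (nat \<Rightarrow> nat) \<Rightarrow> nat list \<Rightarrow> bool" where
  "aok base (RConst a c) regs w = (a < base)"
| "aok base (RAdd a x y) regs w = (a < base \<and> x < base \<and> y < base)"
| "aok base (RSub a x y) regs w = (a < base \<and> x < base \<and> y < base)"
| "aok base (RLoad a x) regs w = False"
| "aok base (RStore a x) regs w = (a < base \<and> x < base \<and> regs a = base + length w)"
| "aok base (RJz a l) regs w = (a < base)"

fun anext :: "instr \<Rightarrow> nat \<Rightarrow> (nat \<Rightarrow> nat) \<Rightarrow> nat list \<Rightarrow> nat \<times> (nat \<Rightarrow> nat) \<times> nat list" where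
  "anext (RConst a c) pc regs w = (Suc pc, regs(a := c), w)"
| "anext (RAdd a x y) pc regs w = (Suc pc, regs(a := regs x + regs y), w)"
| "anext (RSub a x y) pc regs w = (Suc pc, regs(a := regs x - regs y), w)"
| "anext (RLoad a x) pc regs w = (Suc pc, regs, w)"
| "anext (RStore a x) pc regs w = (Suc pc, regs, w @ [regs x])"
| "anext (RJz a l) pc regs w = (if regs a = 0 then (l, regs, w) else (Suc pc, regs, w))"

lemma ainv_step:
  assumes "ainv base regs w M" "aok base ins regs w"
  shows "fst (exec_instr ins pc M) = fst (anext ins pc regs w) \<and>
         ainv base (fst (snd (anext ins pc regs w))) (snd (snd (anext ins pc regs w))) (snd (exec_instr ins pc M))"
  using assms
  by (cases ins) (auto simp: ainv_def nth_append)

definition arun :: "instr list \<Rightarrow> nat \<Rightarrow> nat \<times> (nat \<Rightarrow> nat) \<times> nat list \<Rightarrow> nat \<Rightarrow> nat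
   \<Rightarrow> ((nat \<Rightarrow> nat) \<times> nat list \<Rightarrow> bool) \<Rightarrow> bool" where
  "arun P base s T pcT Q \<longleftrightarrow> (\<forall>M. ainv base (fst (snd s)) (snd (snd s)) M \<longrightarrow>
     (\<exists>t\<le>T. \<exists>regs' w' M'. (ram_step P ^^ t) (fst s, M) = (pcT, M') \<and> Q (regs', w') \<and> ainv base regs' w' M'))"

lemma arun_fin: "pc = pcT \<Longrightarrow> Q (regs, w) \<Longrightarrow> arun P base (pc, regs, w) T pcT Q"
  unfolding arun_def by (rule allI, rule impI, rule exI[of _ 0]) auto

lemma arun_step_any:
  assumes "pc < length P" "aok base (P!pc) regs w"
    "arun P base (anext (P!pc) pc regs w) (T - 1) pcT Q" "0 < T"
  shows "arun P base (pc, regs, w) T pcT Q"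
  unfolding arun_def
proof (intro allI impI)
  fix M assume inv: "ainv base (fst (snd (pc, regs, w))) (snd (snd (pc, regs, w))) M"
  obtain pc1 M1 where e: "exec_instr (P!pc) pc M = (pc1, M1)" by fastforce
  have st: "ram_step P (pc, M) = (pc1, M1)" using assms(1) e by (simp add: ram_step_def)
  from ainv_step[of base regs w M "P!pc" pc] inv assms(2) e
  have "pc1 = fst (anext (P!pc) pc regs w)"
     "ainv base (fst (snd (anext (P!pc) pc regs w))) (snd (snd (anext (P!pc) pc regs w))) M1" by auto
  with assms(3) obtain t regs' w' M' where "t \<le> T - 1" "(ram_step P ^^ t) (pc1, M1) = (pcT, M')" "Q (regs', w')" "ainv base regs' w' M'"
    unfolding arun_def by (metis prod.collapse)
  note h = this
  have e2: "(ram_step P ^^ Suc t) (pc, M) = (ram_step P ^^ t) (pc1, M1)"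
    by (simp only: funpow_Suc_right o_apply st)
  show "\<exists>t\<le>T. \<exists>regs' w' M'. (ram_step P ^^ t) (fst (pc, regs, w), M) = (pcT, M') \<and> Q (regs', w') \<and> ainv base regs' w' M'"
  proof -
    have "Suc t \<le> T" using h(1) assms(4) by simp
    then show ?thesis using h e2 by (metis fst_conv)
  qed
qed

lemma arun_step:
  "pc \<noteq> pcT \<Longrightarrow> pc < length P \<Longrightarrow> aok base (P!pc) regs w \<Longrightarrow> 0 < T \<Longrightarrow>
    arun P base (anext (P!pc) pc regs w) (T - 1) pcT Q \<Longrightarrow> arun P base (pc, regs, w) T pcT Q"
  by (rule arun_step_any)

lemma arun_step0:
  "pc < length P \<Longrightarrow> aok base (P!pc) regs w \<Longrightarrow> 0 < T \<Longrightarrow>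
    arun P base (anext (P!pc) pc regs w) (T - 1) pcT Q \<Longrightarrow> arun P base (pc, regs, w) T pcT Q"
  by (rule arun_step_any)

lemma arun_mono: "arun P base s T pcT Q \<Longrightarrow> T \<le> T' \<Longrightarrow> arun P base s T' pcT Q"
  unfolding arun_def by (meson order_trans)

lemma arun_trans:
  assumes "arun P base s T1 pc1 Q1" "\<And>regs w. Q1 (regs, w) \<Longrightarrow> arun P base (pc1, regs, w) T2 pc2 Q2"
  shows "arun P base s (T1 + T2) pc2 Q2"
  unfolding arun_def
proof (intro allI impI)
  fix M assume "ainv base (fst (snd s)) (snd (snd s)) M"
  with assms(1) obtain t1 regs1 w1 M1 where a: "t1 \<le> T1" "(ram_step P ^^ t1) (fst s, M) = (pc1, M1)" "Q1 (regs1, w1)" "ainv base regs1 w1 M1"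
    unfolding arun_def by blast
  with assms(2)[OF a(3)] obtain t2 regs2 w2 M2 where b: "t2 \<le> T2" "(ram_step P ^^ t2) (pc1, M1) = (pc2, M2)" "Q2 (regs2, w2)" "ainv base regs2 w2 M2"
    unfolding arun_def by fastforce
  have "(ram_step P ^^ (t2 + t1)) (fst s, M) = (pc2, M2)"
    using a(2) b(2) by (simp only: funpow_add o_apply)
  then show "\<exists>t\<le>T1 + T2. \<exists>regs' w' M'. (ram_step P ^^ t) (fst s, M) = (pc2, M') \<and> Q2 (regs', w') \<and> ainv base regs' w' M'"
  proof -
    have "t2 + t1 \<le> T1 + T2" using a(1) b(1) by simp
    then show ?thesis using b(3,4) \<open>(ram_step P ^^ (t2 + t1)) (fst s, M) = (pc2, M2)\<close> by blast
  qed
qed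

lemma arun_loop:
  assumes body: "\<And>m regs w. m < N \<Longrightarrow> I m (regs, w) \<Longrightarrow> arun P base (pcL, regs, w) c pcL (I (Suc m))"
    and fin: "\<And>regs w. I N (regs, w) \<Longrightarrow> arun P base (pcL, regs, w) c' pcE Q"
  shows "m \<le> N \<Longrightarrow> I m (regs, w) \<Longrightarrow> arun P base (pcL, regs, w) ((N - m) * c + c') pcE Q"
proof (induction "N - m" arbitrary: m regs w)
  case 0
  then have "m = N" by simp
  then show ?case using fin 0 by simp
next
  case (Suc x)
  then have mN: "m < N" by simp
  have "arun P base (pcL, regs, w) (c + ((N - Suc m) * c + c')) pcE Q"
    apply (rule arun_trans[OF body[OF mN Suc.prems(2)]])
    apply (rule Suc.hyps(1)) using Suc.hyps(2) mN by auto
  moreover have "N - m = Suc (N - Suc m)" using mN by simp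
  then have "c + ((N - Suc m) * c + c') = (N - m) * c + c'" by simp
  ultimately show ?case by simp
qed

lemma arun_init:
  "ainv base (snd (ram_init xs)) [] (snd (ram_init xs))"
  by (simp add: ainv_def)

lemma ram_output_ainv:
  assumes "ainv base regs w M" "2 \<le> base" "M 0 = base + length w - 1"
  shows "ram_output M = regs 1 # map regs [2..<base] @ w"
proof -
  have "[1..<Suc (M 0)] = [1..<base] @ [base..<base + length w]"
    using assms(2,3) upt_add_eq_append[of 1 base "length w"] by simp
  moreover have "[1..<base] = 1 # [2..<base]" using assms(2) by (simp add: upt_conv_Cons numeral_2_eq_2)
  moreover have "map M [base..<base + length w] = w"
  proof (rule nth_equalityI)
    fix i assume "i < length (map M [base..<base + length w])"
    then show "map M [base..<base + length w] ! i = w ! i" using assms(1) by (simp add: ainv_def)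
  qed simp
  moreover have "map M [2..<base] = map regs [2..<base]"
    using assms(1) by (simp add: ainv_def)
  moreover have "M 1 = regs 1" using assms(1,2) by (simp add: ainv_def)
  ultimately show ?thesis unfolding ram_output_def by simp
qed

lemma arun_computes:
  assumes "arun P base (0, snd (ram_init xs), []) T (length P) Q"
    and "\<And>regs w. Q (regs, w) \<Longrightarrow> regs 0 = base + length w - 1 \<and> regs 1 # map regs [2..<base] @ w = ys"
    and "2 \<le> base" "0 < base"
  shows "ram_computes_within P xs ys T"
proof -
  have "\<exists>t\<le>T. \<exists>regs' w' M'. (ram_step P ^^ t) (0, snd (ram_init xs)) = (length P, M') \<and> Q (regs', w') \<and> ainv base regs' w' M'"
    using assms(1) arun_init[of base xs] unfolding arun_def by (simp only: fst_conv snd_conv)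
  then obtain t regs w M where a: "t \<le> T" "(ram_step P ^^ t) (0, snd (ram_init xs)) = (length P, M)" "Q (regs, w)" "ainv base regs w M"
    by blast
  have "M 0 = regs 0" using a(4) assms(4) by (simp add: ainv_def)
  then have "ram_output M = ys" using ram_output_ainv[OF a(4) assms(3)] assms(2)[OF a(3)] by simp
  moreover have ri: "ram_init xs = (0, snd (ram_init xs))" by (simp add: ram_init_def)
  have "(ram_step P ^^ t) (ram_init xs) = (length P, M)" using a(2) by (subst ri) 
  ultimately show ?thesis unfolding ram_computes_within_def Let_def using a(1)
    by (intro exI[of _ t]) simp
qed

lemma arun_computes1:
  assumes "arun P base (0, snd (ram_init xs), []) T (length P) Q"
    and "\<And>regs w. Q (regs, w) \<Longrightarrow> regs 0 = 1 \<and> [regs 1] = ys"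
    and "2 \<le> base"
  shows "ram_computes_within P xs ys T"
proof -
  have "\<exists>t\<le>T. \<exists>regs' w' M'. (ram_step P ^^ t) (0, snd (ram_init xs)) = (length P, M') \<and> Q (regs', w') \<and> ainv base regs' w' M'"
    using assms(1) arun_init[of base xs] unfolding arun_def by (simp only: fst_conv snd_conv)
  then obtain t regs w M where a: "t \<le> T" "(ram_step P ^^ t) (0, snd (ram_init xs)) = (length P, M)" "Q (regs, w)" "ainv base regs w M"
    by blast
  have "M 0 = regs 0" "M 1 = regs 1" using a(4) assms(3) by (auto simp: ainv_def)
  then have "ram_output M = ys" using assms(2)[OF a(3)] by (simp add: ram_output_def)
  moreover have ri: "ram_init xs = (0, snd (ram_init xs))" by (simp add: ram_init_def)
  have "(ram_step P ^^ t) (ram_init xs) = (length P, M)" using a(2) by (subst ri)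
  ultimately show ?thesis unfolding ram_computes_within_def Let_def using a(1)
    by (intro exI[of _ t]) simp
qed

lemma arun_computes':
  "arun P base (0, snd (ram_init xs), []) T (length P) (\<lambda>(regs, w). regs 0 = base + length w - 1 \<and> regs 1 # map regs [2..<base] @ w = ys)
   \<Longrightarrow> 2 \<le> base \<Longrightarrow> ram_computes_within P xs ys T"
  by (erule arun_computes) auto

lemma Suc_Suc_0_eq_2[simp]: "Suc (Suc 0) = 2" by simp

lemma init_regs: "snd (ram_init [a, b]) = (\<lambda>i. if i = 0 then a else if i = 1 then b else 0)"
  by (auto simp: ram_init_def fun_eq_iff nth_Cons')


definition prog1 :: "instr list" where
  "prog1 = [RConst 3 1, RConst 5 8, RAdd 4 0 2, RStore 5 3, RAdd 5 5 3, RStore 5 3, RAdd 5 5 3, RConst 6 4, RJz 4 68, RSub 4 4 3, RStore 5 2, RAdd 5 5 3, RStore 5 4, RAdd 5 5 3, RStore 5 2, RAdd 5 5 3, RAdd 7 0 4, RStore 5 7, RAdd 5 5 3, RConst 7 2, RStore 5 7, RAdd 5 5 3, RConst 7 1, RAdd 7 6 7, RStore 5 7, RAdd 5 5 3, RConst 7 3, RStore 5 7, RAdd 5 5 3, RStore 5 6, RAdd 5 5 3, RConst 7 2, RAdd 7 6 7, RStore 5 7, RAdd 5 5 3, RConst 7 4, RStore 5 7, RAdd 5 5 3, RStore 5 6, RAdd 5 5 3, RConst 7 2, RAdd 7 6 7, RStore 5 7, RAdd 5 5 3, RConst 7 3, RStore 5 7, RAdd 5 5 3, RConst 7 4, RAdd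 7 6 7, RStore 5 7, RAdd 5 5 3, RSub 7 6 3, RStore 5 7, RAdd 5 5 3, RConst 7 4, RStore 5 7, RAdd 5 5 3, RConst 7 3, RAdd 7 6 7, RStore 5 7, RAdd 5 5 3, RConst 7 5, RAdd 7 6 7, RStore 5 7, RAdd 5 5 3, RConst 7 7, RAdd 6 6 7, RJz 2 8, RStore 5 3, RAdd 5 5 3, RSub 7 6 3, RStore 5 7, RAdd 5 5 3, RAdd 1 6 2, RSub 0 5 3, RConst 2 0, RConst 3 0, RConst 4 0, RConst 5 0, RConst 6 0, RConst 7 0]"

lemma prog1_len[simp]: "length prog1 = 81" by (simp add: prog1_def)

lemma prog1_nth[simp]:
  "prog1 ! 0 = RConst 3 1"
  "prog1 ! Suc 0 = RConst 5 8"
  "prog1 ! 2 = RAdd 4 0 2"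
  "prog1 ! 3 = RStore 5 3"
  "prog1 ! 4 = RAdd 5 5 3"
  "prog1 ! 5 = RStore 5 3"
  "prog1 ! 6 = RAdd 5 5 3"
  "prog1 ! 7 = RConst 6 4"
  "prog1 ! 8 = RJz 4 68"
  "prog1 ! 9 = RSub 4 4 3"
  "prog1 ! 10 = RStore 5 2"
  "prog1 ! 11 = RAdd 5 5 3"
  "prog1 ! 12 = RStore 5 4"
  "prog1 ! 13 = RAdd 5 5 3"
  "prog1 ! 14 = RStore 5 2"
  "prog1 ! 15 = RAdd 5 5 3"
  "prog1 ! 16 = RAdd 7 0 4"
  "prog1 ! 17 = RStore 5 7"
  "prog1 ! 18 = RAdd 5 5 3"
  "prog1 ! 19 = RConst 7 2"
  "prog1 ! 20 = RStore 5 7"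
  "prog1 ! 21 = RAdd 5 5 3"
  "prog1 ! 22 = RConst 7 1"
  "prog1 ! 23 = RAdd 7 6 7"
  "prog1 ! 24 = RStore 5 7"
  "prog1 ! 25 = RAdd 5 5 3"
  "prog1 ! 26 = RConst 7 3"
  "prog1 ! 27 = RStore 5 7"
  "prog1 ! 28 = RAdd 5 5 3"
  "prog1 ! 29 = RStore 5 6"
  "prog1 ! 30 = RAdd 5 5 3"
  "prog1 ! 31 = RConst 7 2"
  "prog1 ! 32 = RAdd 7 6 7"
  "prog1 ! 33 = RStore 5 7"
  "prog1 ! 34 = RAdd 5 5 3"
  "prog1 ! 35 = RConst 7 4"
  "prog1 ! 36 = RStore 5 7"
  "prog1 ! 37 = RAdd 5 5 3"
  "prog1 ! 38 = RStore 5 6"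
  "prog1 ! 39 = RAdd 5 5 3"
  "prog1 ! 40 = RConst 7 2"
  "prog1 ! 41 = RAdd 7 6 7"
  "prog1 ! 42 = RStore 5 7"
  "prog1 ! 43 = RAdd 5 5 3"
  "prog1 ! 44 = RConst 7 3"
  "prog1 ! 45 = RStore 5 7"
  "prog1 ! 46 = RAdd 5 5 3"
  "prog1 ! 47 = RConst 7 4"
  "prog1 ! 48 = RAdd 7 6 7"
  "prog1 ! 49 = RStore 5 7"
  "prog1 ! 50 = RAdd 5 5 3"
  "prog1 ! 51 = RSub 7 6 3"
  "prog1 ! 52 = RStore 5 7"
  "prog1 ! 53 = RAdd 5 5 3"
  "prog1 ! 54 = RConst 7 4"
  "prog1 ! 55 = RStore 5 7"
  "prog1 ! 56 = RAdd 5 5 3"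
  "prog1 ! 57 = RConst 7 3"
  "prog1 ! 58 = RAdd 7 6 7"
  "prog1 ! 59 = RStore 5 7"
  "prog1 ! 60 = RAdd 5 5 3"
  "prog1 ! 61 = RConst 7 5"
  "prog1 ! 62 = RAdd 7 6 7"
  "prog1 ! 63 = RStore 5 7"
  "prog1 ! 64 = RAdd 5 5 3"
  "prog1 ! 65 = RConst 7 7"
  "prog1 ! 66 = RAdd 6 6 7"
  "prog1 ! 67 = RJz 2 8"
  "prog1 ! 68 = RStore 5 3"
  "prog1 ! 69 = RAdd 5 5 3"
  "prog1 ! 70 = RSub 7 6 3"
  "prog1 ! 71 = RStore 5 7"
  "prog1 ! 72 = RAdd 5 5 3"
  "prog1 ! 73 = RAdd 1 6 2"
  "prog1 ! 74 = RSub 0 5 3"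
  "prog1 ! 75 = RConst 2 0"
  "prog1 ! 76 = RConst 3 0"
  "prog1 ! 77 = RConst 4 0"
  "prog1 ! 78 = RConst 5 0"
  "prog1 ! 79 = RConst 6 0"
  "prog1 ! 80 = RConst 7 0"
  by (simp_all add: prog1_def)


definition encg :: "gate list \<Rightarrow> nat list" where
  "encg gs = concat (map enc_gate gs)"

lemma encg_append[simp]: "encg (xs @ ys) = encg xs @ encg ys" by (simp add: encg_def)
lemma encg_Cons[simp]: "encg (g # ys) = enc_gate g @ encg ys" by (simp add: encg_def)
lemma encg_Nil[simp]: "encg [] = []" by (simp add: encg_def)

definition blk1 :: "nat \<Rightarrow> nat \<Rightarrow> gate list" where
  "blk1 n s = [GIn (n - 1 - s), GIn (n + (n - 1 - s)), GNot (4 + 7 * s + 1), GAnd (4 + 7 * s) (4 + 7 * s + 2),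
     GOr (4 + 7 * s) (4 + 7 * s + 2), GAnd (4 + 7 * s + 4) (4 + 7 * s - 1), GOr (4 + 7 * s + 3) (4 + 7 * s + 5)]"

definition gates1 :: "nat \<Rightarrow> nat \<Rightarrow> gate list" where
  "gates1 n m = concat (map (blk1 n) [0..<m])"

lemma gates1_Suc: "gates1 n (Suc m) = gates1 n m @ blk1 n m"
  by (simp add: gates1_def)

definition Inv1 :: "nat \<Rightarrow> nat \<Rightarrow> (nat \<Rightarrow> nat) \<times> nat list \<Rightarrow> bool" where
  "Inv1 n m s \<longleftrightarrow> fst s 0 = n \<and> fst s 2 = 0 \<and> fst s 3 = 1 \<and> fst s 4 = n - m \<and> fst s 5 = 8 + length (snd s)
     \<and> fst s 6 = 4 + 7 * m \<and> snd s = [1, 1] @ encg (gates1 n m)"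

lemma prog1_body:
  assumes "m < n" "Inv1 n m (regs, w)"
  shows "arun prog1 8 (8, regs, w) 60 8 (Inv1 n (Suc m))"
proof -
  have "\<not> n \<le> m" using assms(1) by simp
  then show ?thesis
    using assms(2)
    apply (simp add: Inv1_def)
    apply (elim conjE)
    apply (rule arun_step0, (simp;fail), (simp;fail), (simp;fail), simp)
    apply (rule arun_step, (simp;fail), (simp;fail), (simp;fail), (simp;fail), simp)+
    apply (rule arun_fin)
     apply simp
    apply (simp add: Inv1_def gates1_Suc blk1_def)
    done
qed

definition circ1 :: "nat \<Rightarrow> circuit" where
  "circ1 n = (replicate 3 (GIn 0) @ GConst True # gates1 n n, [3 + 7 * n])"

lemma length_blk1[simp]: "length (blk1 n s) = 7" by (simp add: blk1_def)

lemma length_gates1[simp]: "length (gates1 n m) = 7 * m"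
  unfolding gates1_def by (subst length_concat_uniform[of m _ 7]) auto

lemma upt_2_8: "[2..<8] = [2, 3, 4, 5, 6, 7]" by (simp add: upt_rec)

lemma rep3: "replicate 3 x = [x, x, x]" by (simp add: numeral_eq_Suc del: Suc_Suc_0_eq_2)

lemma enc_circ1: "enc_circuit (circ1 n) = (4 + 7 * n) # [0, 0, 0, 0, 0, 0] @ [1, 1] @ encg (gates1 n n) @ [1, 3 + 7 * n]"
  by (simp add: enc_circuit_def circ1_def encg_def[symmetric] rep3)

lemma prog1_start:
  "arun prog1 8 (0, snd (ram_init [n, k]), []) 8 8 (Inv1 n 0)"
  apply (simp add: init_regs)
  apply (rule arun_step, (simp;fail), (simp;fail), (simp;fail), (simp;fail), simp)+
  apply (rule arun_fin)
   apply simp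
  apply (simp add: Inv1_def gates1_def)
  done

lemma prog1_exit:
  assumes "Inv1 n n (regs, w)"
  shows "arun prog1 8 (8, regs, w) 14 81 (\<lambda>(regs, w). regs 0 = 8 + length w - 1 \<and> regs 1 # map regs [2..<8] @ w = enc_circuit (circ1 n))"
  using assms
  apply (simp add: Inv1_def)
  apply (elim conjE)
  apply (rule arun_step0, (simp;fail), (simp;fail), (simp;fail), simp)
  apply (rule arun_step, (simp;fail), (simp;fail), (simp;fail), (simp;fail), simp)+
  apply (rule arun_fin)
   apply simp
  apply (simp add: enc_circ1 upt_2_8)
  done

lemma prog1_run:
  "ram_computes_within prog1 [n, k] (enc_circuit (circ1 n)) (74 * (n + 1))"
proof -
  have r: "arun prog1 8 (0, snd (ram_init [n, k]), []) (8 + ((n - 0) * 60 + 14)) 81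
     (\<lambda>(regs, w). regs 0 = 8 + length w - 1 \<and> regs 1 # map regs [2..<8] @ w = enc_circuit (circ1 n))"
  proof (rule arun_trans[OF prog1_start])
    fix regs w assume "Inv1 n 0 (regs, w)"
    show "arun prog1 8 (8, regs, w) ((n - 0) * 60 + 14) 81
     (\<lambda>(regs, w). regs 0 = 8 + length w - 1 \<and> regs 1 # map regs [2..<8] @ w = enc_circuit (circ1 n))"
      by (rule arun_loop[of n "Inv1 n", OF prog1_body prog1_exit]) (simp_all add: \<open>Inv1 n 0 (regs, w)\<close>)
  qed
  have "arun prog1 8 (0, snd (ram_init [n, k]), []) (74 * (n + 1)) (length prog1)
     (\<lambda>(regs, w). regs 0 = 8 + length w - 1 \<and> regs 1 # map regs [2..<8] @ w = enc_circuit (circ1 n))"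
  proof -
    have "8 + ((n - 0) * 60 + 14) \<le> 74 * (n + 1)" by simp
    from arun_mono[OF r this] show ?thesis by (simp only: prog1_len)
  qed
  from arun_computes'[OF this] show ?thesis by simp
qed


lemma circ1_len: "length (fst (circ1 n)) = 4 + 7 * n"
  by (simp add: circ1_def)

lemma circ1_nth: "s < n \<Longrightarrow> t < 7 \<Longrightarrow> fst (circ1 n) ! (4 + 7 * s + t) = blk1 n s ! t"
proof -
  assume a: "s < n" "t < 7"
  have "gates1 n n ! (s * 7 + t) = blk1 n s ! t"
    unfolding gates1_def by (rule nth_concat_uniform) (use a in auto)
  then show ?thesis by (simp add: circ1_def rep3 nth_append mult.commute)
qed

lemma circ1_nth3: "fst (circ1 n) ! 3 = GConst True"
  by (simp add: circ1_def rep3)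

lemma circ1_chain:
  fixes B1 B2 :: "nat set" and n :: nat
  defines "xs \<equiv> charvec n B1 @ charvec n B2"
  shows "s \<le> n \<Longrightarrow> gv xs (fst (circ1 n)) (3 + 7 * s) = cmpf B1 B2 (n + 1 - s) s"
proof (induction s)
  case 0
  then show ?case using circ1_nth3[of n] circ1_len[of n] by (simp add: gv_GConst)
next
  case (Suc s)
  define G where "G = fst (circ1 n)"
  define b where "b = 4 + 7 * s"
  have sn: "s < n" using Suc.prems by simp
  have L: "b + 6 < length G" using sn by (simp add: G_def circ1_len b_def)
  have nth: "G ! (b + t) = blk1 n s ! t" if "t < 7" for t
    using circ1_nth[OF sn that] by (simp add: G_def b_def)
  have g0: "G ! b = GIn (n - 1 - s)" using nth[of 0] by (simp add: blk1_def)
  have g1: "G ! (b + 1) = GIn (n + (n - 1 - s))" using nth[of 1] by (simp add: blk1_def)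
  have g2: "G ! (b + 2) = GNot (b + 1)" using nth[of 2] by (simp add: blk1_def b_def)
  have g3: "G ! (b + 3) = GAnd b (b + 2)" using nth[of 3] by (simp add: blk1_def b_def)
  have g4: "G ! (b + 4) = GOr b (b + 2)" using nth[of 4] by (simp add: blk1_def b_def)
  have g5: "G ! (b + 5) = GAnd (b + 4) (b - 1)" using nth[of 5] by (simp add: blk1_def b_def)
  have g6: "G ! (b + 6) = GOr (b + 3) (b + 5)" using nth[of 6] by (simp add: blk1_def b_def)
  have ns: "Suc (n - Suc s) = n - s" using sn by simp
  have v0: "gv xs G b = (n - s \<in> B1)"
    using gv_GIn[OF _ g0] L sn by (simp add: xs_def getv_append getv_charvec ns)
  have v1: "gv xs G (b + 1) = (n - s \<in> B2)"
  proof -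
    define j where "j = n - 1 - s"
    have "j < n" "Suc j = n - s" using sn by (auto simp: j_def)
    then have "getv xs (n + j) = (n - s \<in> B2)" by (simp add: xs_def getv_append getv_charvec)
    then show ?thesis using gv_GIn[OF _ g1] L unfolding j_def by simp
  qed
  have v2: "gv xs G (b + 2) = (n - s \<notin> B2)"
    using gv_GNot[OF _ g2] L v1 by simp
  have v3: "gv xs G (b + 3) = (n - s \<in> B1 \<and> n - s \<notin> B2)"
    using gv_GAnd[OF _ g3] L v0 v2 by simp
  have v4: "gv xs G (b + 4) = (n - s \<in> B1 \<or> n - s \<notin> B2)"
    using gv_GOr[OF _ g4] L v0 v2 by simp
  have prev: "gv xs G (b - 1) = cmpf B1 B2 (n + 1 - s) s"
    using Suc.IH sn by (simp add: G_def b_def)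
  have v5: "gv xs G (b + 5) = ((n - s \<in> B1 \<or> n - s \<notin> B2) \<and> cmpf B1 B2 (n + 1 - s) s)"
    using gv_GAnd[OF _ g5] L v4 prev by (simp add: b_def)
  have v6: "gv xs G (b + 6) = ((n - s \<in> B1 \<and> n - s \<notin> B2) \<or> ((n - s \<in> B1 \<or> n - s \<notin> B2) \<and> cmpf B1 B2 (n + 1 - s) s))"
    using gv_GOr[OF _ g6] L v3 v5 by simp
  have "cmpf B1 B2 (n + 1 - Suc s) (Suc s) = (if (n - s \<in> B1) = (n - s \<in> B2) then cmpf B1 B2 (n + 1 - s) s else n - s \<in> B1)"
  proof -
    have e1: "n + 1 - Suc s = n - s" by simp
    have e2: "Suc (n - s) = n + 1 - s" using sn by simp
    show ?thesis unfolding e1 by (simp add: e2)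
  qed
  then show ?case using v6 by (auto simp: G_def b_def)
qed

lemma circ1_correct:
  "eval_circuit (circ1 n) (charvec n B1 @ charvec n B2) = [cmpf B1 B2 1 n]"
  using circ1_chain[of n n B1 B2]
  by (simp add: eval_circuit_gv circ1_def)


definition prog2 :: "instr list" where
  "prog2 = [RConst 3 1, RConst 4 16, RAdd 7 1 1, RConst 5 2, RAdd 7 7 5, RStore 4 3, RAdd 4 4 3, RStore 4 2, RAdd 4 4 3, RStore 4 3, RAdd 4 4 3, RStore 4 3, RAdd 4 4 3, RAdd 12 1 1, RJz 12 21, RStore 4 3, RAdd 4 4 3, RStore 4 2, RAdd 4 4 3, RSub 12 12 3, RJz 2 14, RConst 5 7, RAdd 6 5 7, RConst 8 0, RAdd 9 0 2, RJz 9 65, RAdd 10 6 2, RStore 4 2, RAdd 4 4 3, RStore 4 8, RAdd 4 4 3, RStore 4 3, RAdd 4 4 3, RStore 4 3, RAdd 4 4 3, RConst 5 2, RAdd 6 6 5, RSub 5 10 7, RAdd 11 5 3, RAdd 12 1 2, RJz 12 62, RConst 5 3, RStore 4 5, RAdd 4 4 3, RStore 4 11, RAdd 4 4 3, RStore 4 10, RAdd 4 4 3, RConst 5 4, RStore 4 5, RAdd 4 4 3, RConst 5 2, RAdd 5 11 5, RStore 4 5, RAdd 4 4 3, RStore 4 6, RAdd 4 4 3, RConst 5 2, RAdd 6 6 5, RAdd 11 11 5, RSub 12 12 3, RJz 2 40, RAdd 8 8 3, RSub 9 9 3, RJz 2 25, RSub 13 6 3, RAdd 14 6 2, RConst 5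 7, RAdd 10 5 7, RAdd 9 0 2, RJz 9 97, RConst 5 2, RStore 4 5, RAdd 4 4 3, RSub 5 10 3, RStore 4 5, RAdd 4 4 3, RConst 5 3, RStore 4 5, RAdd 4 4 3, RStore 4 10, RAdd 4 4 3, RStore 4 6, RAdd 4 4 3, RConst 5 3, RStore 4 5, RAdd 4 4 3, RAdd 5 6 3, RStore 4 5, RAdd 4 4 3, RStore 4 13, RAdd 4 4 3, RConst 5 3, RAdd 6 6 5, RAdd 10 10 7, RSub 9 9 3, RJz 2 70, RStore 4 0, RAdd 4 4 3, RAdd 9 0 2, RConst 5 2, RAdd 14 14 5, RJz 9 109, RStore 4 14, RAdd 4 4 3, RConst 5 3, RAdd 14 14 5, RSub 9 9 3, RJz 2 102, RAdd 1 6 2, RSub 0 4 3, RConst 2 0, RConst 3 0, RConst 4 0, RConst 5 0, RConst 6 0, RConst 7 0, RConst 8 0, RConst 9 0, RConst 10 0, RConst 11 0, RConst 12 0, RConst 13 0, RConst 14 0, RConst 15 0]"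

lemma prog2_len[simp]: "length prog2 = 125" by (simp add: prog2_def)

lemma prog2_nth[simp]:
  "prog2 ! 0 = RConst 3 1"
  "prog2 ! Suc 0 = RConst 4 16"
  "prog2 ! 2 = RAdd 7 1 1"
  "prog2 ! 3 = RConst 5 2"
  "prog2 ! 4 = RAdd 7 7 5"
  "prog2 ! 5 = RStore 4 3"
  "prog2 ! 6 = RAdd 4 4 3"
  "prog2 ! 7 = RStore 4 2"
  "prog2 ! 8 = RAdd 4 4 3"
  "prog2 ! 9 = RStore 4 3"
  "prog2 ! 10 = RAdd 4 4 3"
  "prog2 ! 11 = RStore 4 3"
  "prog2 ! 12 = RAdd 4 4 3"
  "prog2 ! 13 = RAdd 12 1 1"
  "prog2 ! 14 = RJz 12 21"
  "prog2 ! 15 = RStore 4 3"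
  "prog2 ! 16 = RAdd 4 4 3"
  "prog2 ! 17 = RStore 4 2"
  "prog2 ! 18 = RAdd 4 4 3"
  "prog2 ! 19 = RSub 12 12 3"
  "prog2 ! 20 = RJz 2 14"
  "prog2 ! 21 = RConst 5 7"
  "prog2 ! 22 = RAdd 6 5 7"
  "prog2 ! 23 = RConst 8 0"
  "prog2 ! 24 = RAdd 9 0 2"
  "prog2 ! 25 = RJz 9 65"
  "prog2 ! 26 = RAdd 10 6 2"
  "prog2 ! 27 = RStore 4 2"
  "prog2 ! 28 = RAdd 4 4 3"
  "prog2 ! 29 = RStore 4 8"
  "prog2 ! 30 = RAdd 4 4 3"
  "prog2 ! 31 = RStore 4 3"
  "prog2 ! 32 = RAdd 4 4 3"
  "prog2 ! 33 = RStore 4 3"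
  "prog2 ! 34 = RAdd 4 4 3"
  "prog2 ! 35 = RConst 5 2"
  "prog2 ! 36 = RAdd 6 6 5"
  "prog2 ! 37 = RSub 5 10 7"
  "prog2 ! 38 = RAdd 11 5 3"
  "prog2 ! 39 = RAdd 12 1 2"
  "prog2 ! 40 = RJz 12 62"
  "prog2 ! 41 = RConst 5 3"
  "prog2 ! 42 = RStore 4 5"
  "prog2 ! 43 = RAdd 4 4 3"
  "prog2 ! 44 = RStore 4 11"
  "prog2 ! 45 = RAdd 4 4 3"
  "prog2 ! 46 = RStore 4 10"
  "prog2 ! 47 = RAdd 4 4 3"
  "prog2 ! 48 = RConst 5 4"
  "prog2 ! 49 = RStore 4 5"
  "prog2 ! 50 = RAdd 4 4 3"
  "prog2 ! 51 = RConst 5 2"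
  "prog2 ! 52 = RAdd 5 11 5"
  "prog2 ! 53 = RStore 4 5"
  "prog2 ! 54 = RAdd 4 4 3"
  "prog2 ! 55 = RStore 4 6"
  "prog2 ! 56 = RAdd 4 4 3"
  "prog2 ! 57 = RConst 5 2"
  "prog2 ! 58 = RAdd 6 6 5"
  "prog2 ! 59 = RAdd 11 11 5"
  "prog2 ! 60 = RSub 12 12 3"
  "prog2 ! 61 = RJz 2 40"
  "prog2 ! 62 = RAdd 8 8 3"
  "prog2 ! 63 = RSub 9 9 3"
  "prog2 ! 64 = RJz 2 25"
  "prog2 ! 65 = RSub 13 6 3"
  "prog2 ! 66 = RAdd 14 6 2"
  "prog2 ! 67 = RConst 5 7"
  "prog2 ! 68 = RAdd 10 5 7"
  "prog2 ! 69 = RAdd 9 0 2"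
  "prog2 ! 70 = RJz 9 97"
  "prog2 ! 71 = RConst 5 2"
  "prog2 ! 72 = RStore 4 5"
  "prog2 ! 73 = RAdd 4 4 3"
  "prog2 ! 74 = RSub 5 10 3"
  "prog2 ! 75 = RStore 4 5"
  "prog2 ! 76 = RAdd 4 4 3"
  "prog2 ! 77 = RConst 5 3"
  "prog2 ! 78 = RStore 4 5"
  "prog2 ! 79 = RAdd 4 4 3"
  "prog2 ! 80 = RStore 4 10"
  "prog2 ! 81 = RAdd 4 4 3"
  "prog2 ! 82 = RStore 4 6"
  "prog2 ! 83 = RAdd 4 4 3"
  "prog2 ! 84 = RConst 5 3"
  "prog2 ! 85 = RStore 4 5"
  "prog2 ! 86 = RAdd 4 4 3"
  "prog2 ! 87 = RAdd 5 6 3"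
  "prog2 ! 88 = RStore 4 5"
  "prog2 ! 89 = RAdd 4 4 3"
  "prog2 ! 90 = RStore 4 13"
  "prog2 ! 91 = RAdd 4 4 3"
  "prog2 ! 92 = RConst 5 3"
  "prog2 ! 93 = RAdd 6 6 5"
  "prog2 ! 94 = RAdd 10 10 7"
  "prog2 ! 95 = RSub 9 9 3"
  "prog2 ! 96 = RJz 2 70"
  "prog2 ! 97 = RStore 4 0"
  "prog2 ! 98 = RAdd 4 4 3"
  "prog2 ! 99 = RAdd 9 0 2"
  "prog2 ! 100 = RConst 5 2"
  "prog2 ! 101 = RAdd 14 14 5"
  "prog2 ! 102 = RJz 9 109"
  "prog2 ! 103 = RStore 4 14"
  "prog2 ! 104 = RAdd 4 4 3"
  "prog2 ! 105 = RConst 5 3"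
  "prog2 ! 106 = RAdd 14 14 5"
  "prog2 ! 107 = RSub 9 9 3"
  "prog2 ! 108 = RJz 2 102"
  "prog2 ! 109 = RAdd 1 6 2"
  "prog2 ! 110 = RSub 0 4 3"
  "prog2 ! 111 = RConst 2 0"
  "prog2 ! 112 = RConst 3 0"
  "prog2 ! 113 = RConst 4 0"
  "prog2 ! 114 = RConst 5 0"
  "prog2 ! 115 = RConst 6 0"
  "prog2 ! 116 = RConst 7 0"
  "prog2 ! 117 = RConst 8 0"
  "prog2 ! 118 = RConst 9 0"
  "prog2 ! 119 = RConst 10 0"
  "prog2 ! 120 = RConst 11 0"
  "prog2 ! 121 = RConst 12 0"
  "prog2 ! 122 = RConst 13 0"
  "prog2 ! 123 = RConst 14 0"
  "prog2 ! 124 = RConst 15 0"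
  by (simp_all add: prog2_def)


definition colpair :: "nat \<Rightarrow> nat \<Rightarrow> nat \<Rightarrow> gate list" where
  "colpair K m l = [GAnd (7 + m * K + 2 * l + 1) (7 + m * K + K), GOr (7 + m * K + 2 * l + 3) (7 + m * K + K + 2 * l + 2)]"

definition colS :: "nat \<Rightarrow> nat \<Rightarrow> nat \<Rightarrow> gate list" where
  "colS K k m = [GIn m, GConst True] @ concat (map (colpair K m) [0..<k])"

definition col0 :: "nat \<Rightarrow> gate list" where
  "col0 j = [GConst False, GConst True] @ replicate j (GConst False)"

definition dp :: "nat \<Rightarrow> nat \<Rightarrow> nat \<Rightarrow> gate list" where
  "dp K k m = col0 (k + k) @ concat (map (colS K k) [0..<m])"

definition outblk :: "nat \<Rightarrow> nat \<Rightarrow> nat \<Rightarrow> gate list" where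
  "outblk K n m = [GNot (7 + m * K + K - 1), GAnd (7 + m * K + K) (7 + n * K + K + 3 * m),
     GAnd (7 + n * K + K + 3 * m + 1) (7 + n * K + K - 1)]"

definition outg :: "nat \<Rightarrow> nat \<Rightarrow> nat \<Rightarrow> gate list" where
  "outg K n m = concat (map (outblk K n) [0..<m])"

definition outidx :: "nat \<Rightarrow> nat \<Rightarrow> nat \<Rightarrow> nat list" where
  "outidx K n m = map (\<lambda>j. 7 + n * K + K + 2 + 3 * j) [0..<m]"

definition circ2 :: "nat \<Rightarrow> nat \<Rightarrow> circuit" where
  "circ2 n k = (replicate 7 (GIn 0) @ dp (2 * k + 2) k n @ outg (2 * k + 2) n n, outidx (2 * k + 2) n n)"

lemma col0_Suc: "col0 (Suc j) = col0 j @ [GConst False]"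
  by (simp add: col0_def replicate_append_same[symmetric])
lemma dp_Suc: "dp K k (Suc m) = dp K k m @ colS K k m"
  by (simp add: dp_def)
lemma outg_Suc: "outg K n (Suc m) = outg K n m @ outblk K n m"
  by (simp add: outg_def)
lemma outidx_Suc: "outidx K n (Suc m) = outidx K n m @ [7 + n * K + K + 2 + 3 * m]"
  by (simp add: outidx_def)
lemma colpairs_Suc: "concat (map (colpair K m) [0..<Suc l]) = concat (map (colpair K m) [0..<l]) @ colpair K m l"
  by simp

definition Cm :: "nat \<Rightarrow> nat \<Rightarrow> nat \<Rightarrow> (nat \<Rightarrow> nat) \<Rightarrow> nat list \<Rightarrow> bool" where
  "Cm n k K r w \<longleftrightarrow> r 0 = n \<and> r 1 = k \<and> r 2 = 0 \<and> r 3 = 1 \<and> r 4 = 16 + length w \<and> r 7 = K"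

definition I0 :: "nat \<Rightarrow> nat \<Rightarrow> nat \<Rightarrow> nat \<Rightarrow> (nat \<Rightarrow> nat) \<times> nat list \<Rightarrow> bool" where
  "I0 n k K j s \<longleftrightarrow> Cm n k K (fst s) (snd s) \<and> fst s 12 = k + k - j \<and> snd s = encg (col0 j)"

definition Io :: "nat \<Rightarrow> nat \<Rightarrow> nat \<Rightarrow> nat \<Rightarrow> (nat \<Rightarrow> nat) \<times> nat list \<Rightarrow> bool" where
  "Io n k K m s \<longleftrightarrow> Cm n k K (fst s) (snd s) \<and> fst s 6 = 7 + m * K + K \<and> fst s 8 = m \<and> fst s 9 = n - m
     \<and> snd s = encg (dp K k m)"

definition Ii :: "nat \<Rightarrow> nat \<Rightarrow> nat \<Rightarrow> nat \<Rightarrow> nat \<Rightarrow> (nat \<Rightarrow> nat) \<times> nat list \<Rightarrow> bool" where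
  "Ii n k K m l s \<longleftrightarrow> Cm n k K (fst s) (snd s) \<and> fst s 8 = m \<and> fst s 9 = n - m \<and> fst s 10 = 7 + m * K + K
     \<and> fst s 6 = 7 + m * K + K + 2 + 2 * l \<and> fst s 11 = 7 + m * K + 1 + 2 * l \<and> fst s 12 = k - l
     \<and> snd s = encg (dp K k m) @ encg ([GIn m, GConst True] @ concat (map (colpair K m) [0..<l]))"

definition Iout :: "nat \<Rightarrow> nat \<Rightarrow> nat \<Rightarrow> nat \<Rightarrow> (nat \<Rightarrow> nat) \<times> nat list \<Rightarrow> bool" where
  "Iout n k K m s \<longleftrightarrow> Cm n k K (fst s) (snd s) \<and> fst s 6 = 7 + n * K + K + 3 * m \<and> fst s 10 = 7 + m * K + K
     \<and> fst s 13 = 7 + n * K + K - 1 \<and> fst s 14 = 7 + n * K + K \<and> fst s 9 = n - m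
     \<and> snd s = encg (dp K k n) @ encg (outg K n m)"

definition Il :: "nat \<Rightarrow> nat \<Rightarrow> nat \<Rightarrow> nat \<Rightarrow> (nat \<Rightarrow> nat) \<times> nat list \<Rightarrow> bool" where
  "Il n k K m s \<longleftrightarrow> Cm n k K (fst s) (snd s) \<and> fst s 6 = 7 + n * K + K + 3 * n \<and> fst s 14 = 7 + n * K + K + 2 + 3 * m
     \<and> fst s 9 = n - m \<and> snd s = encg (dp K k n) @ encg (outg K n n) @ [n] @ outidx K n m"

lemma upt_2_16: "[2..<16] = [2, 3, 4, 5, 6, 7, 8, 9, 10, 11, 12, 13, 14, 15]" by (simp add: upt_rec)
lemma rep14: "replicate 14 x = [x, x, x, x, x, x, x, x, x, x, x, x, x, x]" by (simp add: numeral_eq_Suc del: Suc_Suc_0_eq_2)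
lemma rep7: "replicate 7 x = [x, x, x, x, x, x, x]" by (simp add: numeral_eq_Suc del: Suc_Suc_0_eq_2)

lemma p2_start:
  assumes "K = 2 * k + 2"
  shows "arun prog2 16 (0, snd (ram_init [n, k]), []) 14 14 (I0 n k K 0)"
  using assms
  apply (simp add: init_regs)
  apply (rule arun_step, (simp;fail), (simp;fail), (simp;fail), (simp;fail), simp)+
  apply (rule arun_fin)
   apply simp
  apply (simp add: I0_def Cm_def col0_def)
  done

lemma p2_init_body:
  assumes "j < k + k" "I0 n k K j (r, w)"
  shows "arun prog2 16 (14, r, w) 7 14 (I0 n k K (Suc j))"
proof -
  have "\<not> k + k \<le> j" using assms(1) by simp
  then show ?thesis
    using assms(2)
    apply (simp add: I0_def Cm_def)
    apply (elim conjE)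
    apply (rule arun_step0, (simp;fail), (simp;fail), (simp;fail), simp)
    apply (rule arun_step, (simp;fail), (simp;fail), (simp;fail), (simp;fail), simp)+
    apply (rule arun_fin)
     apply simp
    apply (simp add: I0_def Cm_def col0_Suc)
    done
qed

lemma p2_init_exit:
  assumes "I0 n k K (k + k) (r, w)"
  shows "arun prog2 16 (14, r, w) 5 25 (Io n k K 0)"
  using assms
  apply (simp add: I0_def Cm_def)
  apply (elim conjE)
  apply (rule arun_step0, (simp;fail), (simp;fail), (simp;fail), simp)
  apply (rule arun_step, (simp;fail), (simp;fail), (simp;fail), (simp;fail), simp)+
  apply (rule arun_fin)
   apply simp
  apply (simp add: Io_def Cm_def dp_def)
  done

lemma p2_outer_pre:
  assumes "m < n" "Io n k K m (r, w)"
  shows "arun prog2 16 (25, r, w) 15 40 (Ii n k K m 0)"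
proof -
  have "\<not> n \<le> m" using assms(1) by simp
  then show ?thesis
    using assms(2)
    apply (simp add: Io_def Cm_def)
    apply (elim conjE)
    apply (rule arun_step0, (simp;fail), (simp;fail), (simp;fail), simp)
    apply (rule arun_step, (simp;fail), (simp;fail), (simp;fail), (simp;fail), simp)+
    apply (rule arun_fin)
     apply simp
    apply (simp add: Ii_def Cm_def)
    done
qed

lemma p2_inner_body:
  assumes "l < k" "Ii n k K m l (r, w)"
  shows "arun prog2 16 (40, r, w) 22 40 (Ii n k K m (Suc l))"
proof -
  have "\<not> k \<le> l" using assms(1) by simp
  then show ?thesis
    using assms(2)
    apply (simp add: Ii_def Cm_def)
    apply (elim conjE)
    apply (rule arun_step0, (simp;fail), (simp;fail), (simp;fail), simp)
    apply (rule arun_step, (simp;fail), (simp;fail), (simp;fail), (simp;fail), simp)+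
    apply (rule arun_fin)
     apply simp
    apply (simp add: Ii_def Cm_def colpair_def)
    done
qed

lemma p2_inner_exit:
  assumes "K = 2 * k + 2" "Ii n k K m k (r, w)"
  shows "arun prog2 16 (40, r, w) 4 25 (Io n k K (Suc m))"
  using assms(2)
  apply (simp add: Ii_def Cm_def)
  apply (elim conjE)
  apply (rule arun_step0, (simp;fail), (simp;fail), (simp;fail), simp)
  apply (rule arun_step, (simp;fail), (simp;fail), (simp;fail), (simp;fail), simp)+
  apply (rule arun_fin)
   apply simp
  apply (simp add: Io_def Cm_def dp_Suc colS_def assms(1))
  done

lemma p2_outer_exit:
  assumes "Io n k K n (r, w)"
  shows "arun prog2 16 (25, r, w) 6 70 (Iout n k K 0)"
  using assms
  apply (simp add: Io_def Cm_def)
  apply (elim conjE)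
  apply (rule arun_step0, (simp;fail), (simp;fail), (simp;fail), simp)
  apply (rule arun_step, (simp;fail), (simp;fail), (simp;fail), (simp;fail), simp)+
  apply (rule arun_fin)
   apply simp
  apply (simp add: Iout_def Cm_def outg_def)
  done

lemma p2_out_body:
  assumes "m < n" "Iout n k K m (r, w)"
  shows "arun prog2 16 (70, r, w) 27 70 (Iout n k K (Suc m))"
proof -
  have "\<not> n \<le> m" using assms(1) by simp
  then show ?thesis
    using assms(2)
    apply (simp add: Iout_def Cm_def)
    apply (elim conjE)
    apply (rule arun_step0, (simp;fail), (simp;fail), (simp;fail), simp)
    apply (rule arun_step, (simp;fail), (simp;fail), (simp;fail), (simp;fail), simp)+
    apply (rule arun_fin)
     apply simp
    apply (simp add: Iout_def Cm_def outg_Suc outblk_def)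
    done
qed

lemma p2_out_exit:
  assumes "Iout n k K n (r, w)"
  shows "arun prog2 16 (70, r, w) 6 102 (Il n k K 0)"
  using assms
  apply (simp add: Iout_def Cm_def)
  apply (elim conjE)
  apply (rule arun_step0, (simp;fail), (simp;fail), (simp;fail), simp)
  apply (rule arun_step, (simp;fail), (simp;fail), (simp;fail), (simp;fail), simp)+
  apply (rule arun_fin)
   apply simp
  apply (simp add: Il_def Cm_def outidx_def)
  done

lemma p2_outs_body:
  assumes "m < n" "Il n k K m (r, w)"
  shows "arun prog2 16 (102, r, w) 7 102 (Il n k K (Suc m))"
proof -
  have "\<not> n \<le> m" using assms(1) by simp
  then show ?thesis
    using assms(2)
    apply (simp add: Il_def Cm_def)
    apply (elim conjE)
    apply (rule arun_step0, (simp;fail), (simp;fail), (simp;fail), simp)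
    apply (rule arun_step, (simp;fail), (simp;fail), (simp;fail), (simp;fail), simp)+
    apply (rule arun_fin)
     apply simp
    apply (simp add: Il_def Cm_def outidx_Suc)
    done
qed

lemma p2_outs_exit:
  assumes "Il n k K n (r, w)"
  shows "arun prog2 16 (102, r, w) 17 125 (\<lambda>(r, w). r 0 = 16 + length w - 1 \<and> r 1 = 7 + n * K + K + 3 * n
     \<and> map r [2..<16] = replicate 14 0 \<and> w = encg (dp K k n) @ encg (outg K n n) @ [n] @ outidx K n n)"
  using assms
  apply (simp add: Il_def Cm_def)
  apply (elim conjE)
  apply (rule arun_step0, (simp;fail), (simp;fail), (simp;fail), simp)
  apply (rule arun_step, (simp;fail), (simp;fail), (simp;fail), (simp;fail), simp)+
  apply (rule arun_fin)
   apply simp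
  apply (simp add: upt_2_16 rep14)
  done

lemma length_colpair[simp]: "length (colpair K m l) = 2" by (simp add: colpair_def)
lemma length_colS[simp]: "length (colS K k m) = 2 + 2 * k"
  unfolding colS_def by (simp add: length_concat_uniform[of k _ 2])
lemma length_dp: "length (dp K k m) = (k + k + 2) + m * (2 + 2 * k)"
  unfolding dp_def by (simp add: col0_def length_concat_uniform[of m _ "2 + 2 * k"])
lemma length_outblk[simp]: "length (outblk K n m) = 3" by (simp add: outblk_def)
lemma length_outg: "length (outg K n m) = 3 * m"
  unfolding outg_def by (simp add: length_concat_uniform[of m _ 3])
lemma length_outidx[simp]: "length (outidx K n m) = m" by (simp add: outidx_def)

lemma enc_circ2:
  assumes "K = 2 * k + 2"
  shows "enc_circuit (circ2 n k) = (7 + n * K + K + 3 * n) # replicate 14 0 @ encg (dp K k n) @ encg (outg K n n) @ [n] @ outidx K n n"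
  using assms by (simp add: enc_circuit_def circ2_def encg_def[symmetric] rep7 rep14 length_dp length_outg algebra_simps)

lemma p2_outer_body:
  assumes K: "K = 2 * k + 2" and "m < n" "Io n k K m (r, w)"
  shows "arun prog2 16 (25, r, w) (15 + ((k - 0) * 22 + 4)) 25 (Io n k K (Suc m))"
proof (rule arun_trans[OF p2_outer_pre[OF assms(2,3)]])
  fix r w assume "Ii n k K m 0 (r, w)"
  show "arun prog2 16 (40, r, w) ((k - 0) * 22 + 4) 25 (Io n k K (Suc m))"
    by (rule arun_loop[of k "Ii n k K m", OF p2_inner_body p2_inner_exit[OF K]]) (simp_all add: \<open>Ii n k K m 0 (r, w)\<close>)
qed

lemma prog2_run:
  assumes "k \<le> n"
  shows "ram_computes_within prog2 [n, k] (enc_circuit (circ2 n k)) (100 * (n + 1) ^ 2)"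
proof -
  define K where "K = 2 * k + 2"
  define Q where "Q = (\<lambda>(r :: nat \<Rightarrow> nat, w :: nat list). r 0 = 16 + length w - 1 \<and> r 1 = 7 + n * K + K + 3 * n
     \<and> map r [2..<16] = replicate 14 0 \<and> w = encg (dp K k n) @ encg (outg K n n) @ [n] @ outidx K n n)"
  have L4: "arun prog2 16 (102, r, w) ((n - 0) * 7 + 17) 125 Q" if "Il n k K 0 (r, w)" for r w
    unfolding Q_def by (rule arun_loop[of n "Il n k K", OF p2_outs_body p2_outs_exit]) (simp_all add: that)
  have L3: "arun prog2 16 (70, r, w) ((n - 0) * 27 + 6 + ((n - 0) * 7 + 17)) 125 Q" if "Iout n k K 0 (r, w)" for r w
  proof (rule arun_trans[OF _ L4])
    show "arun prog2 16 (70, r, w) ((n - 0) * 27 + 6) 102 (Il n k K 0)"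
      by (rule arun_loop[of n "Iout n k K", OF p2_out_body p2_out_exit]) (simp_all add: that)
  qed
  have L2: "arun prog2 16 (25, r, w) ((n - 0) * (15 + ((k - 0) * 22 + 4)) + 6 + ((n - 0) * 27 + 6 + ((n - 0) * 7 + 17))) 125 Q"
    if "Io n k K 0 (r, w)" for r w
  proof (rule arun_trans[OF _ L3])
    show "arun prog2 16 (25, r, w) ((n - 0) * (15 + ((k - 0) * 22 + 4)) + 6) 70 (Iout n k K 0)"
      by (rule arun_loop[of n "Io n k K", OF p2_outer_body[OF K_def] p2_outer_exit]) (simp_all add: that)
  qed
  have L1: "arun prog2 16 (14, r, w) ((k + k - 0) * 7 + 5 + ((n - 0) * (15 + ((k - 0) * 22 + 4)) + 6 + ((n - 0) * 27 + 6 + ((n - 0) * 7 + 17)))) 125 Q"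
    if "I0 n k K 0 (r, w)" for r w
  proof (rule arun_trans[OF _ L2])
    show "arun prog2 16 (14, r, w) ((k + k - 0) * 7 + 5) 25 (Io n k K 0)"
      by (rule arun_loop[of "k + k" "I0 n k K", OF p2_init_body p2_init_exit]) (simp_all add: that)
  qed
  have r: "arun prog2 16 (0, snd (ram_init [n, k]), []) (14 + ((k + k - 0) * 7 + 5 + ((n - 0) * (15 + ((k - 0) * 22 + 4)) + 6 + ((n - 0) * 27 + 6 + ((n - 0) * 7 + 17))))) 125 Q"
    by (rule arun_trans[OF p2_start[OF K_def] L1])
  have tb: "14 + ((k + k - 0) * 7 + 5 + ((n - 0) * (15 + ((k - 0) * 22 + 4)) + 6 + ((n - 0) * 27 + 6 + ((n - 0) * 7 + 17)))) \<le> 100 * (n + 1) ^ 2"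
  proof -
    have a: "22 * (k * n) \<le> 22 * (n * n)" using assms by simp
    have b: "14 * k \<le> 14 * n" using assms by simp
    have "14 + ((k + k - 0) * 7 + 5 + ((n - 0) * (15 + ((k - 0) * 22 + 4)) + 6 + ((n - 0) * 27 + 6 + ((n - 0) * 7 + 17))))
        = 48 + 14 * k + 53 * n + 22 * (k * n)" by (simp add: algebra_simps)
    also have "\<dots> \<le> 48 + 14 * n + 53 * n + 22 * (n * n)" using a b by linarith
    also have "\<dots> \<le> 100 * (n + 1) ^ 2" by (simp add: power2_eq_square algebra_simps)
    finally show ?thesis .
  qed
  have Qimp: "\<And>r w. Q (r, w) \<Longrightarrow> r 0 = 16 + length w - 1 \<and> r 1 # map r [2..<16] @ w = enc_circuit (circ2 n k)"
    unfolding Q_def by (simp add: enc_circ2[OF K_def])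
  have "arun prog2 16 (0, snd (ram_init [n, k]), []) (100 * (n + 1) ^ 2) (length prog2) Q"
    using arun_mono[OF r tb] by simp
  from arun_computes[OF this Qimp] show ?thesis by simp
qed


definition cnt :: "nat set \<Rightarrow> nat \<Rightarrow> nat" where
  "cnt D m = card (D \<inter> {1..m})"

lemma cnt_0[simp]: "cnt D 0 = 0" by (simp add: cnt_def)
lemma cnt_Suc: "cnt D (Suc m) = cnt D m + (if Suc m \<in> D then 1 else 0)"
proof -
  have "D \<inter> {1..Suc m} = (if Suc m \<in> D then insert (Suc m) (D \<inter> {1..m}) else D \<inter> {1..m})"
    by (auto simp: le_Suc_eq)
  then show ?thesis by (simp add: cnt_def)
qed

context
  fixes n k K :: nat and D :: "nat set"
  assumes Kdef: "K = 2 * k + 2"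
begin

abbreviation "GG \<equiv> fst (circ2 n k)"
abbreviation "XS \<equiv> charvec n D"

definition "C0 = col0 (k + k)"
definition "CS = concat (map (colS K k) [0..<n])"
definition "OG = outg K n n"

lemma K0: "0 < K" by (simp add: Kdef)
lemma K1: "Suc 0 < K" by (simp add: Kdef)

lemma len_C0: "length C0 = K" by (simp add: C0_def col0_def Kdef)
lemma len_colS: "length (colS K k m) = K" by (simp add: Kdef)
lemma len_CS: "length CS = n * K" unfolding CS_def by (rule length_concat_uniform) (rule len_colS)
lemma len_OG: "length OG = 3 * n" by (simp add: OG_def length_outg)

lemma GG_eq: "GG = replicate 7 (GIn 0) @ (C0 @ (CS @ OG))"
  unfolding circ2_def Kdef[symmetric] by (simp add: dp_def C0_def CS_def OG_def)

lemma G_len: "length GG = 7 + K + n * K + 3 * n"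
  by (simp add: GG_eq len_C0 len_CS len_OG)

lemma G_col0: "j < K \<Longrightarrow> GG ! (7 + j) = C0 ! j"
proof -
  assume "j < K"
  have "GG ! (7 + j) = (C0 @ (CS @ OG)) ! j" unfolding GG_eq
    using nth_append_length_plus[of "replicate 7 (GIn 0)" "C0 @ (CS @ OG)" j] by simp
  then show ?thesis using \<open>j < K\<close> len_C0 by (simp add: nth_append)
qed

lemma G_colS: "m < n \<Longrightarrow> j < K \<Longrightarrow> GG ! (7 + m * K + K + j) = colS K k m ! j"
proof -
  assume a: "m < n" "j < K"
  have "m * K + j < n * K"
  proof -
    have "m * K + j < m * K + K" using a by simp
    also have "\<dots> = Suc m * K" by simp
    also have "\<dots> \<le> n * K" using a by (intro mult_le_mono1) simp
    finally show ?thesis .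
  qed
  have "GG ! (7 + (K + (m * K + j))) = (C0 @ (CS @ OG)) ! (K + (m * K + j))" unfolding GG_eq
    using nth_append_length_plus[of "replicate 7 (GIn 0)" "C0 @ (CS @ OG)"] by simp
  also have "\<dots> = (CS @ OG) ! (m * K + j)"
    using nth_append_length_plus[of C0 "CS @ OG"] len_C0 by simp
  also have "\<dots> = CS ! (m * K + j)" using \<open>m * K + j < n * K\<close> len_CS by (simp add: nth_append)
  also have "\<dots> = colS K k m ! j" unfolding CS_def
    by (rule nth_concat_uniform) (use a len_colS in auto)
  finally show ?thesis by (simp add: algebra_simps)
qed

lemma G_out: "m < n \<Longrightarrow> t < 3 \<Longrightarrow> GG ! (7 + n * K + K + 3 * m + t) = outblk K n m ! t"
proof -
  assume a: "m < n" "t < 3"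
  have "GG ! (7 + (K + (n * K + (m * 3 + t)))) = (C0 @ (CS @ OG)) ! (K + (n * K + (m * 3 + t)))" unfolding GG_eq
    using nth_append_length_plus[of "replicate 7 (GIn 0)" "C0 @ (CS @ OG)"] by simp
  also have "\<dots> = (CS @ OG) ! (n * K + (m * 3 + t))"
    using nth_append_length_plus[of C0 "CS @ OG"] len_C0 by simp
  also have "\<dots> = OG ! (m * 3 + t)"
    using nth_append_length_plus[of CS OG] len_CS by simp
  also have "\<dots> = outblk K n m ! t" unfolding OG_def outg_def
    by (rule nth_concat_uniform) (use a in auto)
  finally show ?thesis by (simp add: algebra_simps)
qed

lemma colS_nth0: "colS K k m ! 0 = GIn m" by (simp add: colS_def)
lemma colS_nth1: "colS K k m ! Suc 0 = GConst True" by (simp add: colS_def)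
lemma colS_nth_pair: "l < k \<Longrightarrow> t < 2 \<Longrightarrow> colS K k m ! (2 + (l * 2 + t)) = colpair K m l ! t"
proof -
  assume a: "l < k" "t < 2"
  have "concat (map (colpair K m) [0..<k]) ! (l * 2 + t) = colpair K m l ! t"
    by (rule nth_concat_uniform) (use a in auto)
  then show ?thesis by (simp add: colS_def)
qed

lemma a_val: "m \<le> n \<Longrightarrow> l \<le> k \<Longrightarrow> gv XS GG (7 + m * K + 2 * l + 1) = (l \<le> cnt D m)"
proof (induction m arbitrary: l)
  case 0
  have "7 + 0 * K + 2 * l + 1 < length GG" using 0 by (simp add: G_len Kdef)
  moreover have "GG ! (7 + 0 * K + 2 * l + 1) = (if l = 0 then GConst True else GConst False)"
    using G_col0[of "2 * l + 1"] 0 by (auto simp: C0_def col0_def nth_append Kdef)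
  ultimately show ?case by (simp add: gv_GConst)
next
  case (Suc m)
  have mn: "m < n" using Suc.prems by simp
  define c where "c = 7 + m * K + K"
  have cS: "7 + Suc m * K = c" by (simp add: c_def)
  have Lc: "c + 2 * k + 1 < length GG"
  proof -
    have a: "Suc m * K \<le> n * K" using mn by (intro mult_le_mono1) simp
    have b: "2 * k + 1 < K" by (simp add: Kdef)
    have "c + 2 * k + 1 < 7 + K + n * K" using a b unfolding c_def by simp
    then show ?thesis by (simp add: G_len)
  qed
  have gin: "gv XS GG c = (Suc m \<in> D)"
  proof -
    have "GG ! c = GIn m" using G_colS[OF mn, of 0] by (simp add: c_def colS_nth0 K0)
    then show ?thesis using gv_GIn[of c GG m XS] Lc mn by (simp add: getv_charvec)
  qed
  show ?case
  proof (cases l)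
    case 0
    have "GG ! (c + 1) = GConst True" using G_colS[OF mn, of 1] by (simp add: c_def colS_nth1 K0 K1)
    then have "gv XS GG (c + 1)" using gv_GConst[of "c + 1" GG True XS] Lc by simp
    moreover have "7 + Suc m * K + 2 * l + 1 = c + 1" using 0 by (simp add: c_def)
    ultimately show ?thesis using 0 by simp
  next
    case (Suc l')
    have lk: "l' < k" using Suc.prems Suc by simp
    have lK0: "2 + (l' * 2 + 0) < K" and lK1: "2 + (l' * 2 + 1) < K" using lk by (simp_all add: Kdef)
    have gand: "GG ! (c + 2 * l' + 2) = GAnd (7 + m * K + 2 * l' + 1) c"
      using G_colS[OF mn lK0] colS_nth_pair[OF lk, where t=0 and m=m] lk
      by (simp add: c_def colpair_def algebra_simps)
    have gor: "GG ! (c + 2 * l' + 3) = GOr (7 + m * K + 2 * l' + 3) (c + 2 * l' + 2)"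
      using G_colS[OF mn lK1] colS_nth_pair[OF lk, where t=1 and m=m] lk
      by (simp add: c_def colpair_def algebra_simps)
    have IH1: "gv XS GG (7 + m * K + 2 * l' + 1) = (l' \<le> cnt D m)"
      using Suc.IH[of l'] Suc.prems lk by simp
    have IH2: "gv XS GG (7 + m * K + 2 * l' + 3) = (Suc l' \<le> cnt D m)"
      using Suc.IH[of "Suc l'"] Suc.prems lk by simp
    have v1: "gv XS GG (c + 2 * l' + 2) = (l' \<le> cnt D m \<and> Suc m \<in> D)"
      using gv_GAnd[OF _ gand] Lc lk IH1 gin by (simp add: c_def)
    have v2: "gv XS GG (c + 2 * l' + 3) = (Suc l' \<le> cnt D m \<or> (l' \<le> cnt D m \<and> Suc m \<in> D))"
      using gv_GOr[OF _ gor] Lc lk IH2 v1 by (simp add: c_def K0)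
    have "7 + Suc m * K + 2 * l + 1 = c + 2 * l' + 3" using Suc by (simp add: c_def)
    then show ?thesis using v2 Suc by (auto simp: cnt_Suc)
  qed
qed

lemma out_val: "m < n \<Longrightarrow> gv XS GG (7 + n * K + K + 2 + 3 * m) = (Suc m \<in> D \<and> \<not> k \<le> cnt D m \<and> k \<le> cnt D n)"
proof -
  assume mn: "m < n"
  define b where "b = 7 + n * K + K + 3 * m"
  have L: "b + 2 < length GG" using mn by (simp add: b_def G_len algebra_simps)
  have g0: "GG ! b = GNot (7 + m * K + 2 * k + 1)"
    using G_out[OF mn, of 0] by (simp add: b_def outblk_def Kdef)
  have g1: "GG ! (b + 1) = GAnd (7 + m * K + K) b"
    using G_out[OF mn, of 1] by (simp add: b_def outblk_def)
  have g2: "GG ! (b + 2) = GAnd (b + 1) (7 + n * K + 2 * k + 1)"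
    using G_out[OF mn, of 2] by (simp add: b_def outblk_def Kdef)
  have lt1: "7 + m * K + 2 * k + 1 < b"
  proof -
    have a: "m * K \<le> n * K" using mn by (intro mult_le_mono1) simp
    have b: "2 * k + 1 < K" by (simp add: Kdef)
    show ?thesis using a b unfolding b_def by linarith
  qed
  have lt2: "7 + m * K + K < b"
  proof -
    have "Suc m * K \<le> n * K" using mn by (intro mult_le_mono1) simp
    then show ?thesis using K0 unfolding b_def by simp
  qed
  have lt3: "7 + n * K + 2 * k + 1 < b + 2" by (simp add: b_def Kdef)
  have gin: "gv XS GG (7 + m * K + K) = (Suc m \<in> D)"
  proof -
    have "GG ! (7 + m * K + K) = GIn m" using G_colS[OF mn, of 0] by (simp add: colS_nth0 K0)
    then show ?thesis using gv_GIn[of _ GG m XS] L lt2 mn by (simp add: getv_charvec)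
  qed
  have v0: "gv XS GG b = (\<not> k \<le> cnt D m)" using gv_GNot[OF _ g0 lt1] L a_val[of m k] mn by simp
  have v1: "gv XS GG (b + 1) = (Suc m \<in> D \<and> \<not> k \<le> cnt D m)" using gv_GAnd[OF _ g1, of XS] L lt2 v0 gin by simp
  have v2: "gv XS GG (b + 2) = (Suc m \<in> D \<and> \<not> k \<le> cnt D m \<and> k \<le> cnt D n)"
    using gv_GAnd[OF _ g2 _ lt3] L v1 a_val[of n k] by simp
  then show ?thesis by (simp add: b_def algebra_simps)
qed

lemma circ2_eval: "eval_circuit (circ2 n k) XS = map (\<lambda>m. Suc m \<in> D \<and> \<not> k \<le> cnt D m \<and> k \<le> cnt D n) [0..<n]"
proof -
  have "snd (circ2 n k) = outidx K n n" by (simp add: circ2_def Kdef)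
  then have "eval_circuit (circ2 n k) XS = map (\<lambda>m. gv XS GG (7 + n * K + K + 2 + 3 * m)) [0..<n]"
    by (simp add: eval_circuit_gv outidx_def)
  also have "\<dots> = map (\<lambda>m. Suc m \<in> D \<and> \<not> k \<le> cnt D m \<and> k \<le> cnt D n) [0..<n]"
    by (rule map_cong[OF refl]) (rule out_val, simp)
  finally show ?thesis .
qed

end


definition Ssel :: "nat set \<Rightarrow> nat \<Rightarrow> nat set" where
  "Ssel D k = {x \<in> D. cnt D (x - 1) < k}"

lemma Ssel_sub: "Ssel D k \<subseteq> D" by (auto simp: Ssel_def)

lemma card_Ssel_upto:
  assumes "0 \<notin> D"
  shows "card (Ssel D k \<inter> {1..m}) = min k (cnt D m)"
proof (induction m)
  case 0 then show ?case by simp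
next
  case (Suc m)
  show ?case
  proof (cases "Suc m \<in> D \<and> cnt D m < k")
    case True
    then have "Ssel D k \<inter> {1..Suc m} = insert (Suc m) (Ssel D k \<inter> {1..m})"
      by (auto simp: Ssel_def le_Suc_eq)
    then show ?thesis using Suc True by (simp add: cnt_Suc)
  next
    case False
    then have "Ssel D k \<inter> {1..Suc m} = Ssel D k \<inter> {1..m}"
      by (auto simp: Ssel_def le_Suc_eq)
    then show ?thesis using Suc False by (auto simp: cnt_Suc)
  qed
qed

lemma cnt_full: "D \<subseteq> {1..n} \<Longrightarrow> cnt D n = card D"
  by (simp add: cnt_def Int_absorb2)

lemma card_Ssel:
  assumes "D \<subseteq> {1..n}" "k \<le> card D"
  shows "card (Ssel D k) = k"
proof -
  have "0 \<notin> D" using assms(1) by auto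
  have "Ssel D k \<inter> {1..n} = Ssel D k" using assms(1) Ssel_sub by blast
  then show ?thesis using card_Ssel_upto[OF \<open>0 \<notin> D\<close>, of k n] cnt_full[OF assms(1)] assms(2) by simp
qed

lemma Ssel_min:
  assumes D: "D \<subseteq> {1..n}" and B: "B \<subseteq> D" "card B = k"
  shows "Ssel D k \<inter> {..<i} = B \<inter> {..<i} \<Longrightarrow> cmpf (Ssel D k) B i m"
proof (induction m arbitrary: i)
  case 0 then show ?case by simp
next
  case (Suc m)
  let ?S = "Ssel D k"
  have finB: "finite B" using finite_subset[OF B(1) finite_subset[OF D finite_atLeastAtMost]] .
  show ?case
  proof (cases "(i \<in> ?S) = (i \<in> B)")
    case True
    then have "?S \<inter> {..<Suc i} = B \<inter> {..<Suc i}" using Suc.prems by (auto simp: lessThan_Suc)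
    then show ?thesis using True Suc.IH by simp
  next
    case False
    show ?thesis
    proof (cases "i \<in> ?S")
      case True then show ?thesis using False by simp
    next
      case notS: False
      then have iB: "i \<in> B" using False by simp
      then have iD: "i \<in> D" using B by blast
      then have i1: "1 \<le> i" using D by auto
      have "\<not> cnt D (i - 1) < k" using notS iD by (simp add: Ssel_def)
      moreover have "0 \<notin> D" using D by auto
      ultimately have "card (?S \<inter> {1..i - 1}) = k" using card_Ssel_upto[of D k "i - 1"] by simp
      moreover have "?S \<inter> {1..i - 1} = ?S \<inter> {..<i}" using i1 Ssel_sub[of D k] D by auto
      ultimately have "card (B \<inter> {..<i}) = k" using Suc.prems by simp
      moreover have "insert i (B \<inter> {..<i}) \<subseteq> B" using iB by auto
      ultimately have "Suc k \<le> card B" using finB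
      proof -
        have "card (insert i (B \<inter> {..<i})) = Suc k"
          using \<open>card (B \<inter> {..<i}) = k\<close> finB by (subst card_insert_disjoint) auto
        then show ?thesis using card_mono[OF finB \<open>insert i (B \<inter> {..<i}) \<subseteq> B\<close>] by simp
      qed
      then show ?thesis using B by simp
    qed
  qed
qed

lemma exists_sub_iff: "D \<subseteq> {1..n} \<Longrightarrow> (\<exists>B\<in>famF (n, k). B \<subseteq> D) = (k \<le> card D)"
proof
  assume "D \<subseteq> {1..n}" "\<exists>B\<in>famF (n, k). B \<subseteq> D"
  then obtain B where "B \<subseteq> D" "card B = k" by (auto simp: famF_def)
  then show "k \<le> card D" using \<open>D \<subseteq> {1..n}\<close> by (metis card_mono finite_atLeastAtMost finite_subset)
next
  assume "D \<subseteq> {1..n}" "k \<le> card D"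
  then obtain B where "B \<subseteq> D" "card B = k" using obtain_subset_with_card_n by metis
  then show "\<exists>B\<in>famF (n, k). B \<subseteq> D" using \<open>D \<subseteq> {1..n}\<close> by (auto simp: famF_def)
qed

lemma C2_correct:
  assumes D: "D \<subseteq> {1..n}"
  shows "if \<exists>B\<in>famF (n, k). B \<subseteq> D
         then \<exists>B. is_min_sub (Rf (n, k)) (famF (n, k)) D B \<and> eval_circuit (circ2 n k) (charvec n D) = charvec n B
         else eval_circuit (circ2 n k) (charvec n D) = charvec n {}"
proof -
  have ev: "eval_circuit (circ2 n k) (charvec n D) = map (\<lambda>m. Suc m \<in> D \<and> \<not> k \<le> cnt D m \<and> k \<le> cnt D n) [0..<n]"
    by (rule circ2_eval) simp
  have cn: "cnt D n = card D" by (rule cnt_full[OF D])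
  show ?thesis
  proof (cases "k \<le> card D")
    case True
    let ?S = "Ssel D k"
    have "eval_circuit (circ2 n k) (charvec n D) = charvec n ?S"
      using ev cn True by (simp add: charvec_def Ssel_def not_le)
    moreover have "is_min_sub (Rf (n, k)) (famF (n, k)) D ?S"
    proof -
      have Sf: "?S \<in> famF (n, k)" using card_Ssel[OF D True] Ssel_sub[of D k] D by (auto simp: famF_def)
      have "\<forall>B'\<in>famF (n, k). B' \<subseteq> D \<longrightarrow> (?S, B') \<in> Rf (n, k)"
      proof (intro ballI impI)
        fix B' assume "B' \<in> famF (n, k)" "B' \<subseteq> D"
        then have cB: "card B' = k" by (simp add: famF_def)
        have "?S \<inter> {..<1} = B' \<inter> {..<1}" using \<open>B' \<subseteq> D\<close> Ssel_sub[of D k] D by auto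
        then have "cmpf ?S B' 1 n" by (rule Ssel_min[OF D \<open>B' \<subseteq> D\<close> cB])
        then show "(?S, B') \<in> Rf (n, k)" using Sf \<open>B' \<in> famF (n, k)\<close> by (simp add: Rf_def)
      qed
      then show ?thesis using Sf Ssel_sub by (simp add: is_min_sub_def)
    qed
    ultimately have "\<exists>B. is_min_sub (Rf (n, k)) (famF (n, k)) D B \<and> eval_circuit (circ2 n k) (charvec n D) = charvec n B"
      by blast
    moreover have "\<exists>B\<in>famF (n, k). B \<subseteq> D" using exists_sub_iff[OF D] True by simp
    ultimately show ?thesis by simp
  next
    case False
    then show ?thesis using exists_sub_iff[OF D] ev cn by (simp add: charvec_def)
  qed
qed


definition prog3 :: "nat \<Rightarrow> instr list" where
  "prog3 p = [RConst 2 1, RSub 1 1 2, RConst 3 p, RJz 1 7, RSub 0 0 3, RSub 1 1 2, RJz 4 3, RAdd 1 0 4, RConst 0 1]"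

lemma prog3_len[simp]: "length (prog3 p) = 9" by (simp add: prog3_def)
lemma prog3_nth[simp]:
  "prog3 p ! 0 = RConst 2 1" "prog3 p ! Suc 0 = RSub 1 1 2" "prog3 p ! 2 = RConst 3 p" "prog3 p ! 3 = RJz 1 7"
  "prog3 p ! 4 = RSub 0 0 3" "prog3 p ! 5 = RSub 1 1 2" "prog3 p ! 6 = RJz 4 3" "prog3 p ! 7 = RAdd 1 0 4"
  "prog3 p ! 8 = RConst 0 1"
  by (simp_all add: prog3_def)

definition I3 :: "nat \<Rightarrow> nat \<Rightarrow> nat \<Rightarrow> nat \<Rightarrow> (nat \<Rightarrow> nat) \<times> nat list \<Rightarrow> bool" where
  "I3 n k p m s \<longleftrightarrow> (fst s) 0 = n - p * m \<and> (fst s) 1 = k - 1 - m \<and> (fst s) 2 = 1 \<and> (fst s) 3 = p \<and> (fst s) 4 = 0 \<and> snd s = []"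

lemma prog3_run:
  "ram_computes_within (prog3 p) [n, k] [n - p * (k - 1)] ((k - 1) * 4 + 3 + 3)"
proof -
  have stp: "arun (prog3 p) 5 (0, snd (ram_init [n, k]), []) 3 3 (I3 n k p 0)"
    apply (simp add: init_regs)
    apply (rule arun_step, (simp;fail), (simp;fail), (simp;fail), (simp;fail), simp)+
    apply (rule arun_fin; simp add: I3_def)
    done
  have body: "arun (prog3 p) 5 (3, regs, w) 4 3 (I3 n k p (Suc m))" if "m < k - 1" "I3 n k p m (regs, w)" for m regs w
  proof -
    have "\<not> k \<le> Suc m" using that(1) by simp
    then show ?thesis
    using that(2)
    apply (simp add: I3_def)
    apply (elim conjE)
    apply (rule arun_step0, (simp;fail), (simp;fail), (simp;fail), simp)
    apply (rule arun_step, (simp;fail), (simp;fail), (simp;fail), (simp;fail), simp)+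
    apply (rule arun_fin; simp add: I3_def algebra_simps)
    done
  qed
  have fin: "arun (prog3 p) 5 (3, regs, w) 3 9 (\<lambda>(regs, w). regs 0 = 1 \<and> [regs 1] = [n - p * (k - 1)])"
    if "I3 n k p (k - 1) (regs, w)" for regs w
    using that
    apply (simp add: I3_def)
    apply (rule arun_step, (simp;fail), (simp;fail), (simp;fail), (simp;fail), simp)+
    apply (rule arun_fin; simp)
    done
  have "arun (prog3 p) 5 (0, snd (ram_init [n, k]), []) (3 + (((k - 1) - 0) * 4 + 3)) 9 (\<lambda>(regs, w). regs 0 = 1 \<and> [regs 1] = [n - p * (k - 1)])"
    apply (rule arun_trans[OF stp])
    apply (rule arun_loop[of "k - 1" "I3 n k p"])
    using body fin by auto
  then have "arun (prog3 p) 5 (0, snd (ram_init [n, k]), []) ((k - 1) * 4 + 3 + 3) (length (prog3 p)) (\<lambda>(regs, w). regs 0 = 1 \<and> [regs 1] = [n - p * (k - 1)])"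
    by (simp add: algebra_simps)
  then show ?thesis
    by (rule arun_computes1) auto
qed


lemma rcw_mono: "ram_computes_within P xs ys T \<Longrightarrow> T \<le> T' \<Longrightarrow> ram_computes_within P xs ys T'"
  unfolding ram_computes_within_def by (meson order_trans)

lemma idxA_D: "\<alpha> \<in> idxA r \<Longrightarrow> 2 \<le> r \<Longrightarrow> 1 \<le> snd \<alpha> \<and> snd \<alpha> \<le> fst \<alpha>"
proof -
  assume a: "\<alpha> \<in> idxA r" "2 \<le> r"
  then have "1 \<le> snd \<alpha>" "r * snd \<alpha> \<le> fst \<alpha>" by (auto simp: idxA_def)
  moreover have "snd \<alpha> \<le> r * snd \<alpha>" using a(2) by simp
  ultimately show ?thesis by linarith
qed

lemma part1: "\<forall>\<alpha>\<in>idxA r. \<exists>C. ram_computes_within prog1 (encF \<alpha>) (enc_circuit C) (74 * (fst \<alpha> + 1) ^ 1) \<and>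
          (\<forall>B1\<in>famF \<alpha>. \<forall>B2\<in>famF \<alpha>. eval_circuit C (charvec (fst \<alpha>) B1 @ charvec (fst \<alpha>) B2) = [(B1, B2) \<in> Rf \<alpha>])"
proof
  fix \<alpha> assume "\<alpha> \<in> idxA r"
  obtain n k where a: "\<alpha> = (n, k)" by fastforce
  have "ram_computes_within prog1 (encF \<alpha>) (enc_circuit (circ1 n)) (74 * (fst \<alpha> + 1) ^ 1)"
    using prog1_run[of n k] a by (simp add: encF_def)
  moreover have "\<forall>B1\<in>famF \<alpha>. \<forall>B2\<in>famF \<alpha>. eval_circuit (circ1 n) (charvec (fst \<alpha>) B1 @ charvec (fst \<alpha>) B2) = [(B1, B2) \<in> Rf \<alpha>]"
    using circ1_correct[of n] a by (simp add: Rf_def)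
  ultimately show "\<exists>C. ram_computes_within prog1 (encF \<alpha>) (enc_circuit C) (74 * (fst \<alpha> + 1) ^ 1) \<and>
          (\<forall>B1\<in>famF \<alpha>. \<forall>B2\<in>famF \<alpha>. eval_circuit C (charvec (fst \<alpha>) B1 @ charvec (fst \<alpha>) B2) = [(B1, B2) \<in> Rf \<alpha>])"
    by blast
qed

lemma part2:
  assumes "2 \<le> r"
  shows "\<forall>\<alpha>\<in>idxA r. \<exists>C. ram_computes_within prog2 (encF \<alpha>) (enc_circuit C) (100 * (fst \<alpha> + 1) ^ 2) \<and>
          (\<forall>D. D \<subseteq> {1..fst \<alpha>} \<longrightarrow>
             (if \<exists>B\<in>famF \<alpha>. B \<subseteq> D
              then \<exists>B. is_min_sub (Rf \<alpha>) (famF \<alpha>) D B \<and> eval_circuit C (charvec (fst \<alpha>) D) = charvec (fst \<alpha>) B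
              else eval_circuit C (charvec (fst \<alpha>) D) = charvec (fst \<alpha>) {}))"
proof
  fix \<alpha> assume al: "\<alpha> \<in> idxA r"
  obtain n k where a: "\<alpha> = (n, k)" by fastforce
  have kn: "k \<le> n" using idxA_D[OF al assms] a by simp
  have "ram_computes_within prog2 (encF \<alpha>) (enc_circuit (circ2 n k)) (100 * (fst \<alpha> + 1) ^ 2)"
    using prog2_run[OF kn] a by (simp add: encF_def)
  moreover have "\<forall>D. D \<subseteq> {1..fst \<alpha>} \<longrightarrow>
             (if \<exists>B\<in>famF \<alpha>. B \<subseteq> D
              then \<exists>B. is_min_sub (Rf \<alpha>) (famF \<alpha>) D B \<and> eval_circuit (circ2 n k) (charvec (fst \<alpha>) D) = charvec (fst \<alpha>) B
              else eval_circuit (circ2 n k) (charvec (fst \<alpha>) D) = charvec (fst \<alpha>) {})"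
    using C2_correct[of _ n k] a by simp
  ultimately show "\<exists>C. ram_computes_within prog2 (encF \<alpha>) (enc_circuit C) (100 * (fst \<alpha> + 1) ^ 2) \<and>
          (\<forall>D. D \<subseteq> {1..fst \<alpha>} \<longrightarrow>
             (if \<exists>B\<in>famF \<alpha>. B \<subseteq> D
              then \<exists>B. is_min_sub (Rf \<alpha>) (famF \<alpha>) D B \<and> eval_circuit C (charvec (fst \<alpha>) D) = charvec (fst \<alpha>) B
              else eval_circuit C (charvec (fst \<alpha>) D) = charvec (fst \<alpha>) {}))"
    by blast
qed

lemma part3:
  assumes "2 \<le> r"
  shows "\<forall>p :: nat. prime p \<longrightarrow> (\<exists>P3. \<forall>\<alpha>\<in>idxA r. ram_computes_within P3 (encF \<alpha>) [cd p (fst \<alpha>) (famF \<alpha>)] (6 * (fst \<alpha> + 1) ^ 1))"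
proof (intro allI impI)
  fix p :: nat
  have "\<forall>\<alpha>\<in>idxA r. ram_computes_within (prog3 p) (encF \<alpha>) [cd p (fst \<alpha>) (famF \<alpha>)] (6 * (fst \<alpha> + 1) ^ 1)"
  proof
    fix \<alpha> assume al: "\<alpha> \<in> idxA r"
    obtain n k where a: "\<alpha> = (n, k)" by fastforce
    have kn: "1 \<le> k" "k \<le> n" using idxA_D[OF al assms] a by simp_all
    have "cd p n (famF (n, k)) = n - p * (k - 1)" by (rule cd_famF[OF kn(1)])
    moreover have "(k - 1) * 4 + 3 + 3 \<le> 6 * (n + 1)" using kn by simp
    ultimately show "ram_computes_within (prog3 p) (encF \<alpha>) [cd p (fst \<alpha>) (famF \<alpha>)] (6 * (fst \<alpha> + 1) ^ 1)"
      using rcw_mono[OF prog3_run[of p n k]] a by (simp add: encF_def)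
  qed
  then show "\<exists>P3. \<forall>\<alpha>\<in>idxA r. ram_computes_within P3 (encF \<alpha>) [cd p (fst \<alpha>) (famF \<alpha>)] (6 * (fst \<alpha> + 1) ^ 1)"
    by blast
qed

theorem lemma5p4:
  fixes r :: nat
  assumes "r \<ge> 2"
  shows "strongly_poly_computable (idxA r) fst encF famF"
  unfolding strongly_poly_computable_def
  apply (rule exI[of _ Rf])
  apply (intro conjI)
     apply (simp add: Rf_linear)
    apply (rule exI[of _ 74], rule exI[of _ 1], rule exI[of _ prog1], rule part1)
   apply (rule exI[of _ 100], rule exI[of _ 2], rule exI[of _ prog2], rule part2[OF assms])
  apply (rule exI[of _ 6], rule exI[of _ 1], rule part3[OF assms])
  done


end
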